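(* Suppose (A1)–(A5) hold. Let $u\in\mathcal{U}^+(\mathbb{T}^d\times I)$ be a viscosity subsolution and $v\in\mathcal{U}^-(\mathbb{T}^d\times I)$ a viscosity supersolution of $$F(x,Dw(x,\xi),\xi)+\int_I k(\xi,\eta)\big(w(x,\xi)-w(x,\eta)\big)\,d\eta=f(x,\xi)\quad\text{in }\mathbb{T}^d\times I,$$ and assume $u$ and $-v$ are bounded above on $\mathbb{T}^d\times I$. If $u\le v$ on $\mathcal{Z}$, then $u\le v$ on $\mathbb{T}^d\times I$.
   Context: $I\subset\mathbb{R}$ finite interval with $|I|=1$; $k:I\times I\to\mathbb{R}$ Borel measurable with $0<k_0\le k\le k_1$. $F\in C(\mathbb{T}^d\times\mathbb{R}^d)\otimes\mathcal{B}(I)$ with $F(\cdot,p,\cdot)$ bounded for each $p$; $f\in C(\mathbb{T}^d)\otimes\mathcal{B}(I)$ bounded. $\tilde{\mathcal{A}}:=\{x\in\mathbb{T}^d: f(x,\xi)=0\text{ for a.e. }\xi\in I\}$, $\mathcal{Z}:=\{(x,\xi)\in\tilde{\mathcal{A}}\times I: f(x,\xi)=0\}$. $\mathcal{U}^+(\mathbb{T}^d\times I)$: functions $u$ with $u(x,\cdot)$ Borel measurable and integrable on $I$ for each $x$ and $u(\cdot,\xi)$ upper semicontinuous for each $\xi$; $\mathcal{U}^-:=-\mathcal{U}^+$. Subsolution: whenever $\phi\in C^1(\mathbb{T}^d)$, $\xi\in I$, $u(\cdot,\xi)-\phi$ has a local maximum at $\hat x$, then $F(\hat x,D\phi(\hat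 x),\xi)+\int_I k(\xi,\eta)(u(\hat x,\xi)-u(\hat x,\eta))d\eta\le f(\hat x,\xi)$; supersolution: reverse inequality at local minima. Assumptions: (A1) $C_1|p|^m-C_2\le F(x,p,\xi)$ for constants $C_1,C_2>0$, $m>1$. (A2) $f\ge0$ and $\mathcal{A}:=\{x: f(x,\xi)=0\ \forall\xi\}\neq\emptyset$. (A3) $p\mapsto F(x,p,\xi)$ convex. (A4) $F\ge0$, $F(x,0,\xi)=0$. (A5) modulus $\omega$ with $|f(x,\xi)-f(y,\xi)|\le\omega(|x-y|)$; for each $R>0$ modulus $\omega_R$ with $|F(x,p,\xi)-F(y,q,\xi)|\le\omega_R(|x-y|+|p-q|)$ for $p,q\in B(0,R)$, uniformly in $\xi$. *)

theory Defs
  imports "HOL-Analysis.Analysis"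
begin

text \<open>Functions on the torus T^d are represented as Z^d-periodic functions on real^'n.\<close>
definition periodic_fn :: "(real^'n \<Rightarrow> 'b) \<Rightarrow> bool" where
  "periodic_fn g \<longleftrightarrow> (\<forall>x i. g (x + axis i 1) = g x)"

definition usc :: "('a::topological_space \<Rightarrow> real) \<Rightarrow> bool" where
  "usc g \<longleftrightarrow> (\<forall>t. open {y. g y < t})"

definition modulus :: "(real \<Rightarrow> real) \<Rightarrow> bool" where
  "modulus \<omega> \<longleftrightarrow> \<omega> 0 = 0 \<and> mono_on {0..} \<omega> \<and> (\<omega> \<longlongrightarrow> 0) (at_right 0)"

definition C1_test :: "(real^'n \<Rightarrow> real) \<Rightarrow> (real^'n \<Rightarrow> real^'n) \<Rightarrow> bool" where
  "C1_test \<phi> D\<phi> \<longleftrightarrow> periodic_fn \<phi> \<and> continuous_on UNIV D\<phi> \<and>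
     (\<forall>x. (\<phi> has_derivative (\<lambda>h. D\<phi> x \<bullet> h)) (at x))"

definition U_plus :: "real set \<Rightarrow> (real^'n \<Rightarrow> real \<Rightarrow> real) \<Rightarrow> bool" where
  "U_plus I u \<longleftrightarrow> periodic_fn u \<and>
     (\<forall>x. u x \<in> borel_measurable (restrict_space borel I) \<and> set_integrable lborel I (u x)) \<and>
     (\<forall>\<xi>\<in>I. usc (\<lambda>x. u x \<xi>))"

definition U_minus :: "real set \<Rightarrow> (real^'n \<Rightarrow> real \<Rightarrow> real) \<Rightarrow> bool" where
  "U_minus I v \<longleftrightarrow> U_plus I (\<lambda>x \<xi>. - v x \<xi>)"

definition nonlocal_term :: "real set \<Rightarrow> (real \<Rightarrow> real \<Rightarrow> real) \<Rightarrow> (real^'n \<Rightarrow> real \<Rightarrow> real)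
    \<Rightarrow> real^'n \<Rightarrow> real \<Rightarrow> real" where
  "nonlocal_term I k w x \<xi> = (LINT \<eta>:I|lborel. k \<xi> \<eta> * (w x \<xi> - w x \<eta>))"

definition viscosity_subsolution ::
  "real set \<Rightarrow> (real^'n \<Rightarrow> real^'n \<Rightarrow> real \<Rightarrow> real) \<Rightarrow> (real \<Rightarrow> real \<Rightarrow> real)
    \<Rightarrow> (real^'n \<Rightarrow> real \<Rightarrow> real) \<Rightarrow> (real^'n \<Rightarrow> real \<Rightarrow> real) \<Rightarrow> bool" where
  "viscosity_subsolution I F k f u \<longleftrightarrow>
     (\<forall>\<phi> D\<phi> \<xi> xh. C1_test \<phi> D\<phi> \<longrightarrow> \<xi> \<in> I \<longrightarrow>
        (\<exists>e>0. \<forall>y. dist y xh < e \<longrightarrow> u y \<xi> - \<phi> y \<le> u xh \<xi> - \<phi> xh) \<longrightarrow>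
        F xh (D\<phi> xh) \<xi> + nonlocal_term I k u xh \<xi> \<le> f xh \<xi>)"

definition viscosity_supersolution ::
  "real set \<Rightarrow> (real^'n \<Rightarrow> real^'n \<Rightarrow> real \<Rightarrow> real) \<Rightarrow> (real \<Rightarrow> real \<Rightarrow> real)
    \<Rightarrow> (real^'n \<Rightarrow> real \<Rightarrow> real) \<Rightarrow> (real^'n \<Rightarrow> real \<Rightarrow> real) \<Rightarrow> bool" where
  "viscosity_supersolution I F k f v \<longleftrightarrow>
     (\<forall>\<phi> D\<phi> \<xi> xh. C1_test \<phi> D\<phi> \<longrightarrow> \<xi> \<in> I \<longrightarrow>
        (\<exists>e>0. \<forall>y. dist y xh < e \<longrightarrow> v y \<xi> - \<phi> y \<ge> v xh \<xi> - \<phi> xh) \<longrightarrow>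
        F xh (D\<phi> xh) \<xi> + nonlocal_term I k v xh \<xi> \<ge> f xh \<xi>)"

definition A_tilde :: "real set \<Rightarrow> (real^'n \<Rightarrow> real \<Rightarrow> real) \<Rightarrow> (real^'n) set" where
  "A_tilde I f = {x. AE \<xi> in lborel. \<xi> \<in> I \<longrightarrow> f x \<xi> = 0}"

definition Zset :: "real set \<Rightarrow> (real^'n \<Rightarrow> real \<Rightarrow> real) \<Rightarrow> ((real^'n) \<times> real) set" where
  "Zset I f = {(x, \<xi>). x \<in> A_tilde I f \<and> \<xi> \<in> I \<and> f x \<xi> = 0}"

end

theory Submission imports Defs begin

definition Zv :: "(real^'n) set" where "Zv = {z. \<forall>i. z$i \<in> \<int>}"

lemma periodic_axis_nat:
  assumes "periodic_fn g" shows "g (x + of_nat n *\<^sub>R axis i 1) = g x"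
proof (induction n arbitrary: x)
  case 0 then show ?case by simp
next
  case (Suc n)
  have "g (x + of_nat (Suc n) *\<^sub>R axis i 1) = g ((x + of_nat n *\<^sub>R axis i 1) + axis i 1)"
    by (simp add: algebra_simps)
  also have "\<dots> = g (x + of_nat n *\<^sub>R axis i 1)"
    using assms by (simp add: periodic_fn_def)
  also have "\<dots> = g x" by (rule Suc)
  finally show ?case .
qed

lemma periodic_axis_int:
  assumes "periodic_fn g" shows "g (x + of_int c *\<^sub>R axis i 1) = g x"
proof (cases "c \<ge> 0")
  case True
  define n where "n = nat c"
  have "c = int n" using True unfolding n_def by simp
  then show ?thesis using periodic_axis_nat[OF assms] by simp
next
  case False
  define n where "n = nat (- c)"
  have n: "c = - int n" using False unfolding n_def by simp
  have "g ((x - of_nat n *\<^sub>R axis i 1) + of_nat n *\<^sub>R axis i 1) = g (x - of_nat n *\<^sub>R axis i 1)"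
    by (rule periodic_axis_nat[OF assms])
  then show ?thesis using n by (simp add: algebra_simps)
qed

lemma periodic_sum:
  assumes "periodic_fn g" "\<forall>i\<in>S. c i \<in> \<int>" "finite S"
  shows "g (x + (\<Sum>i\<in>S. c i *\<^sub>R axis i 1)) = g x"
  using assms(3,2)
proof (induction S arbitrary: x rule: finite_induct)
  case empty then show ?case by simp
next
  case (insert j S)
  have "c j \<in> \<int>" using insert.prems by simp
  then obtain z where z: "c j = of_int z" unfolding Ints_def by auto
  have "g (x + (\<Sum>i\<in>insert j S. c i *\<^sub>R axis i 1)) = g ((x + (\<Sum>i\<in>S. c i *\<^sub>R axis i 1)) + of_int z *\<^sub>R axis j 1)"
    unfolding sum.insert[OF insert.hyps] z by (simp only: ac_simps)
  also have "\<dots> = g (x + (\<Sum>i\<in>S. c i *\<^sub>R axis i 1))" by (rule periodic_axis_int[OF assms(1)])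
  also have "\<dots> = g x" by (rule insert.IH) (use insert.prems in auto)
  finally show ?case .
qed

lemma vec_axis_sum: "(\<Sum>i\<in>UNIV. (z::real^'n)$i *\<^sub>R axis i 1) = z"
  by (simp add: vec_eq_iff axis_def sum.delta if_distrib cong: if_cong)

lemma periodic_Zv:
  assumes "periodic_fn g" "z \<in> Zv" shows "g (x + z) = g x"
  using periodic_sum[OF assms(1), of UNIV "\<lambda>i. z$i" x] assms(2) vec_axis_sum[of z]
  by (simp add: Zv_def)

lemma Zv_minus: "z \<in> Zv \<Longrightarrow> - z \<in> Zv" by (simp add: Zv_def)
lemma Zv_add: "z \<in> Zv \<Longrightarrow> y \<in> Zv \<Longrightarrow> z + y \<in> Zv" by (simp add: Zv_def)
lemma Zv_diff: "z \<in> Zv \<Longrightarrow> y \<in> Zv \<Longrightarrow> z - y \<in> Zv" by (simp add: Zv_def)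
lemma Zv_axis: "axis i 1 \<in> Zv" by (simp add: Zv_def axis_def)

lemma periodic_Zv':
  assumes "periodic_fn g" "x - y \<in> Zv" shows "g x = g y"
  using periodic_Zv[OF assms(1,2), of y] by simp

definition fl :: "real^'n \<Rightarrow> real^'n" where "fl x = (\<chi> i. of_int \<lfloor>x$i\<rfloor>)"

lemma fl_Zv: "fl x \<in> Zv" by (simp add: fl_def Zv_def)
lemma frac_cbox: "x - fl x \<in> cbox 0 1"
  by (auto simp: fl_def mem_box_cart) linarith+

definition Q :: "real^'n \<Rightarrow> real" where "Q z = (\<Sum>i\<in>UNIV. 1 - cos (2 * pi * z$i))"
definition DQ :: "real^'n \<Rightarrow> real^'n" where "DQ z = (\<chi> i. 2 * pi * sin (2 * pi * (z$i)))"

lemma Q_nonneg: "Q z \<ge> 0"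
  unfolding Q_def by (intro sum_nonneg) auto

lemma cos_shift_int: "t \<in> \<int> \<Longrightarrow> cos (2 * pi * (s + t)) = cos (2 * pi * s)"
proof -
  assume "t \<in> \<int>" then obtain n where "t = of_int n" by (auto elim: Ints_cases)
  moreover have "2 * pi * (s + of_int n) = 2 * pi * s + 2 * pi * of_int n" by (simp add: algebra_simps)
  ultimately show ?thesis by (simp only: cos_add cos_int_2pin sin_int_2pin)
qed

lemma Q_per: "c \<in> Zv \<Longrightarrow> Q (z + c) = Q z"
  unfolding Q_def Zv_def by (auto intro!: sum.cong simp: cos_shift_int)

lemma Q_zero: assumes "Q z = 0" shows "z \<in> Zv"
proof -
  have "\<forall>i\<in>UNIV. 1 - cos (2 * pi * z$i) = 0"
    using assms unfolding Q_def by (subst sum_nonneg_eq_0_iff[symmetric]) auto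
  then have "cos (2 * pi * z$i) = 1" for i by auto
  then have "\<exists>n::int. 2 * pi * z$i = of_int n * 2 * pi" for i using cos_one_2pi_int by blast
  then show ?thesis unfolding Zv_def by (auto simp: Ints_def)
qed

lemma Q_zero_Zv: "c \<in> Zv \<Longrightarrow> Q c = 0"
  using Q_per[of c 0] by (simp add: Q_def)

lemma DQ_Zv: "c \<in> Zv \<Longrightarrow> DQ c = 0"
proof -
  assume "c \<in> Zv"
  then have "\<forall>i. \<exists>n::int. c$i = of_int n" by (auto simp: Zv_def elim!: Ints_cases)
  then show ?thesis unfolding DQ_def
    by (auto simp: vec_eq_iff) (metis mult.assoc sin_int_2pin)
qed

lemma DQ_minus: "DQ (- z) = - DQ z" by (simp add: DQ_def vec_eq_iff)

lemma continuous_Q: "continuous_on UNIV Q"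
  unfolding Q_def by (intro continuous_intros)

lemma continuous_DQ: "continuous_on UNIV DQ"
  unfolding DQ_def by (intro continuous_on_vec_lambda continuous_intros)

lemma norm_DQ: "norm (DQ z) \<le> 2 * pi * CARD('n)" for z :: "real^'n"
proof -
  have "norm (DQ z) \<le> (\<Sum>i\<in>UNIV. \<bar>DQ z $ i\<bar>)" by (rule norm_le_l1_cart)
  also have "\<dots> \<le> (\<Sum>i\<in>(UNIV::'n set). 2*pi)"
    by (intro sum_mono) (auto simp: DQ_def abs_mult)
  finally show ?thesis by (simp add: mult.commute)
qed

lemma Q_deriv: "(Q has_derivative (\<lambda>h. DQ z \<bullet> h)) (at z)"
proof -
  have "((\<lambda>z. 1 - cos (2 * pi * z$i)) has_derivative (\<lambda>h. 2 * pi * sin (2 * pi * z$i) * h$i)) (at z)" for i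
    by (auto intro!: derivative_eq_intros bounded_linear_imp_has_derivative bounded_linear_vec_nth simp: algebra_simps)
  then have "(Q has_derivative (\<lambda>h. \<Sum>i\<in>UNIV. 2 * pi * sin (2 * pi * z$i) * h$i)) (at z)"
    unfolding Q_def by (intro has_derivative_sum) auto
  moreover have "(\<lambda>h. \<Sum>i\<in>UNIV. 2 * pi * sin (2 * pi * z$i) * h$i) = (\<lambda>h. DQ z \<bullet> h)"
    unfolding DQ_def inner_vec_def by (rule ext) (simp only: vec_lambda_beta inner_real_def)
  ultimately show ?thesis by (rule back_subst)
qed

definition susc :: "('a::metric_space \<Rightarrow> real) \<Rightarrow> bool" where
  "susc g \<longleftrightarrow> (\<forall>X x t. X \<longlonglongrightarrow> x \<longrightarrow> g x < t \<longrightarrow> (\<forall>\<^sub>F n in sequentially. g (X n) < t))"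

lemma usc_susc: assumes "usc g" shows "susc (g::'a::metric_space \<Rightarrow> real)"
  unfolding susc_def
proof (intro allI impI)
  fix X x t assume "X \<longlonglongrightarrow> x" "g x < t"
  moreover have "open {y. g y < t}" using assms by (simp add: usc_def)
  ultimately have "\<forall>\<^sub>F n in sequentially. X n \<in> {y. g y < t}"
    by (intro topological_tendstoD) auto
  then show "\<forall>\<^sub>F n in sequentially. g (X n) < t" by simp
qed

lemma susc_add: assumes "susc g" "susc h" shows "susc (\<lambda>x. g x + h x)"
  unfolding susc_def
proof (intro allI impI)
  fix X x t assume X: "X \<longlonglongrightarrow> x" and t: "g x + h x < t"
  define d where "d = (t - g x - h x) / 2"
  have d: "d > 0" using t by (simp add: d_def)
  have dd: "g x + d + (h x + d) = t" by (simp add: d_def)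
  have "\<forall>\<^sub>F n in sequentially. g (X n) < g x + d" using assms(1) X d unfolding susc_def by auto
  moreover have "\<forall>\<^sub>F n in sequentially. h (X n) < h x + d" using assms(2) X d unfolding susc_def by auto
  ultimately show "\<forall>\<^sub>F n in sequentially. g (X n) + h (X n) < t"
    by eventually_elim (use dd in linarith)
qed

lemma susc_cont: assumes "continuous_on UNIV h" shows "susc h"
  unfolding susc_def
proof (intro allI impI)
  fix X x t assume X: "X \<longlonglongrightarrow> x" and t: "h x < t"
  have "(\<lambda>n. h (X n)) \<longlonglongrightarrow> h x"
    using assms X by (metis UNIV_I continuous_on_def continuous_on_tendsto_compose eventually_sequentially)
  then show "\<forall>\<^sub>F n in sequentially. h (X n) < t" using t by (simp add: order_tendstoD(2))
qed

lemma susc_scale: assumes "susc g" "c > 0" shows "susc (\<lambda>x. c * g x)"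
  unfolding susc_def
proof (intro allI impI)
  fix X x t assume X: "X \<longlonglongrightarrow> x" and t: "c * g x < t"
  then have "g x < t / c" using assms(2) by (simp add: field_simps)
  then have "\<forall>\<^sub>F n in sequentially. g (X n) < t / c" using assms(1) X unfolding susc_def by auto
  then show "\<forall>\<^sub>F n in sequentially. c * g (X n) < t"
    by eventually_elim (use assms(2) in \<open>simp add: field_simps\<close>)
qed

lemma susc_fst: assumes "susc g" shows "susc (\<lambda>p. g (fst p))"
  unfolding susc_def
proof (intro allI impI)
  fix X x t assume "X \<longlonglongrightarrow> x" "g (fst x) < t"
  moreover have "(\<lambda>n. fst (X n)) \<longlonglongrightarrow> fst x" using \<open>X \<longlonglongrightarrow> x\<close> by (rule tendsto_fst)
  ultimately show "\<forall>\<^sub>F n in sequentially. g (fst (X n)) < t" using assms unfolding susc_def by blast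
qed

lemma susc_snd: assumes "susc g" shows "susc (\<lambda>p. g (snd p))"
  unfolding susc_def
proof (intro allI impI)
  fix X x t assume "X \<longlonglongrightarrow> x" "g (snd x) < t"
  moreover have "(\<lambda>n. snd (X n)) \<longlonglongrightarrow> snd x" using \<open>X \<longlonglongrightarrow> x\<close> by (rule tendsto_snd)
  ultimately show "\<forall>\<^sub>F n in sequentially. g (snd (X n)) < t" using assms unfolding susc_def by blast
qed

lemma susc_max:
  fixes g :: "'a::metric_space \<Rightarrow> real"
  assumes "compact K" "K \<noteq> {}" "susc g" "\<And>x. x \<in> K \<Longrightarrow> g x \<le> B"
  shows "\<exists>x\<in>K. \<forall>y\<in>K. g y \<le> g x"
proof -
  define S where "S = Sup (g ` K)"
  have bdd: "bdd_above (g ` K)" using assms(4) by (rule bdd_aboveI2)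
  have "\<exists>x\<in>K. S - 1 / (Suc n) < g x" for n
  proof -
    have "S - 1 / (Suc n) < S" by simp
    then show ?thesis unfolding S_def using assms(2) by (subst (asm) less_cSup_iff) (auto simp: bdd)
  qed
  then obtain X where X: "\<And>n. X n \<in> K" "\<And>n. S - 1 / (Suc n) < g (X n)" by metis
  from assms(1) have "seq_compact K" by (rule compact_imp_seq_compact)
  then obtain l r where l: "l \<in> K" "strict_mono r" "(X \<circ> r) \<longlonglongrightarrow> l"
    using X(1) by (metis seq_compactE)
  have "S \<le> g l"
  proof (rule ccontr)
    assume "\<not> S \<le> g l"
    then have gl: "g l < (g l + S) / 2" by simp
    have "\<forall>\<^sub>F n in sequentially. g ((X \<circ> r) n) < (g l + S) / 2"
      using assms(3) l(3) gl unfolding susc_def by blast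
    then obtain N where N: "\<And>n. n \<ge> N \<Longrightarrow> g (X (r n)) < (g l + S) / 2"
      by (auto simp: eventually_sequentially)
    obtain n where n: "1 / (Suc n) < (S - g l) / 2" "n \<ge> N"
    proof -
      have "(S - g l) / 2 > 0" using \<open>\<not> S \<le> g l\<close> by simp
      then obtain m where "inverse (real (Suc m)) < (S - g l) / 2" using reals_Archimedean by blast
      then have m: "1 / (Suc m) < (S - g l) / 2" by (simp add: inverse_eq_divide)
      have "1 / real (Suc (max m N)) \<le> 1 / (Suc m)"
        by (intro divide_left_mono) auto
      then show ?thesis using m by (intro that[of "max m N"]) auto
    qed
    have "n \<le> r n" using l(2) by (rule seq_suble)
    then have "1 / real (Suc (r n)) \<le> 1 / (Suc n)" by (intro divide_left_mono) auto
    then show False using X(2)[of "r n"] N[OF n(2)] n(1) by simp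
  qed
  moreover have "\<forall>y\<in>K. g y \<le> S" unfolding S_def using bdd by (auto intro: cSup_upper)
  ultimately show ?thesis using l(1) by force
qed

lemma rev_fatou:
  fixes g :: "nat \<Rightarrow> 'a \<Rightarrow> real"
  assumes int: "\<And>n. integrable M (g n)" "integrable M h" "integrable M D"
    and bnd: "\<And>n x. g n x - h x \<le> D x" "\<And>x. 0 \<le> D x"
    and lim: "\<And>x e. e > 0 \<Longrightarrow> \<forall>\<^sub>F n in sequentially. g n x \<le> h x + e"
    and e: "e > 0"
  shows "\<forall>\<^sub>F n in sequentially. integral\<^sup>L M (g n) \<le> integral\<^sup>L M h + e"
proof -
  define G where "G n x = max (g n x - h x) 0" for n x
  have intG: "integrable M (G n)" for n unfolding G_def using int by auto
  have "(\<lambda>n. integral\<^sup>L M (G n)) \<longlonglongrightarrow> integral\<^sup>L M (\<lambda>x. 0::real)"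
  proof (rule integral_dominated_convergence[where w=D])
    show "(\<lambda>x. 0::real) \<in> borel_measurable M" by simp
    show "G n \<in> borel_measurable M" for n using intG by auto
    show "integrable M D" by fact
    show "AE x in M. (\<lambda>n. G n x) \<longlonglongrightarrow> 0"
    proof (intro AE_I2 tendstoI)
      fix x and d :: real assume d: "d > 0"
      have "\<forall>\<^sub>F n in sequentially. g n x \<le> h x + d / 2" using lim d by simp
      then show "\<forall>\<^sub>F n in sequentially. dist (G n x) 0 < d"
        by eventually_elim (use d in \<open>auto simp: G_def\<close>)
    qed
    show "AE x in M. norm (G n x) \<le> D x" for n
      using bnd by (auto simp: G_def)
  qed
  then have "(\<lambda>n. integral\<^sup>L M (G n)) \<longlonglongrightarrow> 0" by simp
  then have "\<forall>\<^sub>F n in sequentially. integral\<^sup>L M (G n) < e" using e by (simp add: order_tendstoD(2))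
  then show ?thesis
  proof eventually_elim
    case (elim n)
    have "integral\<^sup>L M (g n) = integral\<^sup>L M h + integral\<^sup>L M (\<lambda>x. g n x - h x)"
      using int by simp
    also have "integral\<^sup>L M (\<lambda>x. g n x - h x) \<le> integral\<^sup>L M (G n)"
      using int intG by (intro integral_mono) (auto simp: G_def)
    finally show ?case using elim by simp
  qed
qed

lemma modulus_tendsto:
  assumes "modulus \<omega>" "\<And>n. s n \<ge> 0" "s \<longlonglongrightarrow> 0"
  shows "(\<lambda>n. \<omega> (s n)) \<longlonglongrightarrow> 0"
proof -
  have om: "\<omega> 0 = 0" "(\<omega> \<longlongrightarrow> 0) (at_right 0)" using assms(1) by (auto simp: modulus_def)
  show ?thesis
  proof (rule tendstoI)
    fix e :: real assume e: "e > 0"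
    from om(2) e have "\<forall>\<^sub>F t in at_right 0. dist (\<omega> t) 0 < e" by (rule tendstoD)
    then obtain d where d: "d > 0" "\<And>t. t > 0 \<Longrightarrow> t < d \<Longrightarrow> dist (\<omega> t) 0 < e"
      unfolding eventually_at_right_field by auto
    have "\<forall>\<^sub>F n in sequentially. s n < d" using assms(3) d(1) by (simp add: order_tendstoD(2))
    then show "\<forall>\<^sub>F n in sequentially. dist (\<omega> (s n)) 0 < e"
    proof eventually_elim
      case (elim n)
      show ?case
      proof (cases "s n = 0")
        case True then show ?thesis using om e by simp
      next
        case False then show ?thesis using d elim assms(2)[of n] by auto
      qed
    qed
  qed
qed


lemma powr_bound: assumes "(m::real) > 1" "t \<ge> 0" "t powr m \<le> B" shows "t \<le> max 1 B"
proof (cases "t \<le> 1")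
  case True then show ?thesis by simp
next
  case False
  then have "t powr 1 \<le> t powr m" using assms by (intro powr_mono) auto
  then show ?thesis using assms False by simp
qed


lemma Qs_deriv: "((\<lambda>y. Q (y - c)) has_derivative (\<lambda>h. DQ (y - c) \<bullet> h)) (at y)"
proof -
  have "((\<lambda>y. y - c) has_derivative (\<lambda>h. h)) (at y)"
    by (auto intro!: derivative_eq_intros)
  from has_derivative_compose[OF this Q_deriv] show ?thesis by simp
qed

lemma Qr_deriv: "((\<lambda>y. Q (c - y)) has_derivative (\<lambda>h. - (DQ (c - y) \<bullet> h))) (at y)"
proof -
  have "((\<lambda>y. c - y) has_derivative (\<lambda>h. - h)) (at y)"
    by (auto intro!: derivative_eq_intros)
  from has_derivative_compose[OF this Q_deriv] show ?thesis by simp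
qed

lemma DQs_cont: "continuous_on UNIV (\<lambda>y. DQ (y - c))"
  by (rule continuous_on_compose2[OF continuous_DQ]) (auto intro!: continuous_intros)

lemma DQr_cont: "continuous_on UNIV (\<lambda>y. DQ (c - y))"
  by (rule continuous_on_compose2[OF continuous_DQ]) (auto intro!: continuous_intros)

lemma C1_sub:
  fixes A N \<theta> :: real
  assumes "\<theta> > 0"
  shows "C1_test (\<lambda>y. (A + N * Q (y - b) + Q (y - x0)) / \<theta>)
                 (\<lambda>y. (1/\<theta>) *\<^sub>R (N *\<^sub>R DQ (y - b) + DQ (y - x0)))"
  unfolding C1_test_def
proof (intro conjI allI)
  show "periodic_fn (\<lambda>y. (A + N * Q (y - b) + Q (y - x0)) / \<theta>)"
    unfolding periodic_fn_def
  proof (intro allI)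
    fix x i
    have "Q (x + axis i 1 - b) = Q (x - b)" "Q (x + axis i 1 - x0) = Q (x - x0)"
      using Q_per[OF Zv_axis, of "x - b" i] Q_per[OF Zv_axis, of "x - x0" i]
      by (simp_all add: algebra_simps)
    then show "(A + N * Q (x + axis i 1 - b) + Q (x + axis i 1 - x0)) / \<theta> = (A + N * Q (x - b) + Q (x - x0)) / \<theta>"
      by simp
  qed
  show "continuous_on UNIV (\<lambda>y. (1/\<theta>) *\<^sub>R (N *\<^sub>R DQ (y - b) + DQ (y - x0)))"
    by (intro continuous_intros DQs_cont)
  fix y
  have "((\<lambda>y. (1/\<theta>) * (A + N * Q (y - b) + Q (y - x0))) has_derivative
      (\<lambda>h. (1/\<theta>) * (0 + N * (DQ (y - b) \<bullet> h) + DQ (y - x0) \<bullet> h))) (at y)"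
    by (intro has_derivative_mult_right has_derivative_add has_derivative_const Qs_deriv)
  moreover have "(\<lambda>h. (1/\<theta>) * (0 + N * (DQ (y - b) \<bullet> h) + DQ (y - x0) \<bullet> h))
      = (\<lambda>h. ((1/\<theta>) *\<^sub>R (N *\<^sub>R DQ (y - b) + DQ (y - x0))) \<bullet> h)"
    by (rule ext) (simp add: inner_add_left)
  moreover have "(\<lambda>y. (1/\<theta>) * (A + N * Q (y - b) + Q (y - x0))) = (\<lambda>y. (A + N * Q (y - b) + Q (y - x0)) / \<theta>)"
    by (rule ext) simp
  ultimately show "((\<lambda>y. (A + N * Q (y - b) + Q (y - x0)) / \<theta>) has_derivative
      (\<lambda>h. ((1/\<theta>) *\<^sub>R (N *\<^sub>R DQ (y - b) + DQ (y - x0))) \<bullet> h)) (at y)"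
    by simp
qed

lemma C1_super:
  fixes A N B :: real
  shows "C1_test (\<lambda>y. A - N * Q (a - y) - B) (\<lambda>y. N *\<^sub>R DQ (a - y))"
  unfolding C1_test_def
proof (intro conjI allI)
  show "periodic_fn (\<lambda>y. A - N * Q (a - y) - B)"
    unfolding periodic_fn_def
  proof (intro allI)
    fix x i
    have "Q (a - (x + axis i 1)) = Q (a - x)"
      using Q_per[OF Zv_minus[OF Zv_axis], of "a - x" i] by (simp add: algebra_simps)
    then show "A - N * Q (a - (x + axis i 1)) - B = A - N * Q (a - x) - B" by simp
  qed
  show "continuous_on UNIV (\<lambda>y. N *\<^sub>R DQ (a - y))"
    by (intro continuous_intros DQr_cont)
  fix y
  have "((\<lambda>y. A - N * Q (a - y) - B) has_derivative (\<lambda>h. 0 - N * (- (DQ (a - y) \<bullet> h)) - 0)) (at y)"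
    by (intro has_derivative_mult_right has_derivative_diff has_derivative_const Qr_deriv)
  moreover have "(\<lambda>h. 0 - N * (- (DQ (a - y) \<bullet> h)) - 0) = (\<lambda>h. (N *\<^sub>R DQ (a - y)) \<bullet> h)"
    by (rule ext) simp
  ultimately show "((\<lambda>y. A - N * Q (a - y) - B) has_derivative (\<lambda>h. (N *\<^sub>R DQ (a - y)) \<bullet> h)) (at y)"
    by simp
qed

locale cmp =
  fixes I :: "real set" and k :: "real \<Rightarrow> real \<Rightarrow> real"
    and F :: "real^'n \<Rightarrow> real^'n \<Rightarrow> real \<Rightarrow> real"
    and f u v :: "real^'n \<Rightarrow> real \<Rightarrow> real"
    and k0 k1 C1 C2 m Mu Mv Bf \<theta> :: real
  assumes I_int: "is_interval I" "bounded I" "measure lborel I = 1"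
    and k_meas: "(\<lambda>p. k (fst p) (snd p)) \<in> borel_measurable (restrict_space borel (I \<times> I))"
    and k_bds: "0 < k0" "\<And>\<xi> \<eta>. \<xi> \<in> I \<Longrightarrow> \<eta> \<in> I \<Longrightarrow> k0 \<le> k \<xi> \<eta> \<and> k \<xi> \<eta> \<le> k1"
    and F_per: "\<And>p \<xi>. periodic_fn (\<lambda>x. F x p \<xi>)"
    and f_per: "\<And>\<xi>. periodic_fn (\<lambda>x. f x \<xi>)"
    and f_cont: "\<And>\<xi>. \<xi> \<in> I \<Longrightarrow> continuous_on UNIV (\<lambda>x. f x \<xi>)"
    and f_bdd: "\<And>x \<xi>. \<xi> \<in> I \<Longrightarrow> \<bar>f x \<xi>\<bar> \<le> Bf"
    and A1: "C1 > 0" "C2 > 0" "m > 1"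
      "\<And>x p \<xi>. \<xi> \<in> I \<Longrightarrow> C1 * norm p powr m - C2 \<le> F x p \<xi>"
    and A2: "\<And>x \<xi>. \<xi> \<in> I \<Longrightarrow> f x \<xi> \<ge> 0"
    and A3: "\<And>x \<xi>. \<xi> \<in> I \<Longrightarrow> convex_on UNIV (\<lambda>p. F x p \<xi>)"
    and A4: "\<And>x \<xi>. \<xi> \<in> I \<Longrightarrow> F x 0 \<xi> = 0"
    and A5: "\<And>R. R > 0 \<Longrightarrow> \<exists>\<omega>. modulus \<omega> \<and> (\<forall>x y p q. \<forall>\<xi>\<in>I. norm p < R \<longrightarrow> norm q < R \<longrightarrow>
                 \<bar>F x p \<xi> - F y q \<xi>\<bar> \<le> \<omega> (dist x y + dist p q))"
    and u_cls: "U_plus I u" and v_cls: "U_minus I v"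
    and u_sub: "viscosity_subsolution I F k f u"
    and v_super: "viscosity_supersolution I F k f v"
    and u_bdd: "\<And>x \<xi>. \<xi> \<in> I \<Longrightarrow> u x \<xi> \<le> Mu"
    and v_bdd: "\<And>x \<xi>. \<xi> \<in> I \<Longrightarrow> - v x \<xi> \<le> Mv"
    and theta: "0 < \<theta>" "\<theta> < 1"
begin

definition w :: "real^'n \<Rightarrow> real \<Rightarrow> real" where "w x \<xi> = \<theta> * u x \<xi> - v x \<xi>"

lemma I_sets: "I \<in> sets lborel" using I_int(1) by (simp add: real_interval_borel_measurable)

lemma I_fin: "emeasure lborel I < \<infinity>" using I_int(2) by (rule emeasure_bounded_finite)

lemma I_emeasure: "emeasure lborel I = 1"
  using I_fin I_int(3) emeasure_eq_ennreal_measure[of lborel I] by simp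

lemma k1_nonneg: "k1 \<ge> 0"
proof -
  have "I \<noteq> {}" using I_int(3) by auto
  then obtain \<xi> where "\<xi> \<in> I" by auto
  then show ?thesis using k_bds(2)[of \<xi> \<xi>] k_bds(1) by linarith
qed

lemma u_per: "periodic_fn u" using u_cls by (simp add: U_plus_def)
lemma v_per: "periodic_fn v"
proof -
  have "periodic_fn (\<lambda>x \<xi>. - v x \<xi>)" using v_cls by (simp add: U_minus_def U_plus_def)
  then show ?thesis unfolding periodic_fn_def by (metis minus_equation_iff ext)
qed

lemma u_per': "x - y \<in> Zv \<Longrightarrow> u x \<xi> = u y \<xi>" using periodic_Zv'[OF u_per] by metis
lemma v_per': "x - y \<in> Zv \<Longrightarrow> v x \<xi> = v y \<xi>" using periodic_Zv'[OF v_per] by metis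
lemma w_per': "x - y \<in> Zv \<Longrightarrow> w x \<xi> = w y \<xi>" by (simp add: w_def u_per' v_per')
lemma f_per': "x - y \<in> Zv \<Longrightarrow> f x \<xi> = f y \<xi>" using periodic_Zv'[OF f_per] by metis
lemma F_per': "x - y \<in> Zv \<Longrightarrow> F x p \<xi> = F y p \<xi>" using periodic_Zv'[OF F_per] by metis

lemma u_susc: "\<xi> \<in> I \<Longrightarrow> susc (\<lambda>x. u x \<xi>)"
  using u_cls by (auto simp: U_plus_def intro: usc_susc)
lemma mv_susc: "\<xi> \<in> I \<Longrightarrow> susc (\<lambda>x. - v x \<xi>)"
  using v_cls by (auto simp: U_minus_def U_plus_def intro: usc_susc)

lemma pair_susc: "\<xi> \<in> I \<Longrightarrow> susc (\<lambda>p. \<theta> * u (fst p) \<xi> - v (snd p) \<xi>)"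
  using susc_add[OF susc_fst[OF susc_scale[OF u_susc theta(1)]] susc_snd[OF mv_susc]]
  by simp

lemma w_susc: "\<xi> \<in> I \<Longrightarrow> susc (\<lambda>x. w x \<xi>)"
  using susc_add[OF susc_scale[OF u_susc theta(1)] mv_susc] by (simp add: w_def)

lemma w_bdd: "\<xi> \<in> I \<Longrightarrow> w x \<xi> \<le> \<theta> * Mu + Mv"
  using u_bdd[of \<xi> x] v_bdd[of \<xi> x] theta by (simp add: w_def) (smt (verit) mult_left_mono)

lemma int_u: "integrable lborel (\<lambda>\<zeta>. indicator I \<zeta> * u x \<zeta>)"
  using u_cls by (simp add: U_plus_def set_integrable_def)

lemma int_v: "integrable lborel (\<lambda>\<zeta>. indicator I \<zeta> * v x \<zeta>)"
proof -
  have "integrable lborel (\<lambda>\<zeta>. indicator I \<zeta> * - v x \<zeta>)"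
    using v_cls by (simp add: U_minus_def U_plus_def set_integrable_def)
  then have "integrable lborel (\<lambda>\<zeta>. - (indicator I \<zeta> * - v x \<zeta>))" by simp
  then show ?thesis by simp
qed

lemma int_const: "integrable lborel (\<lambda>\<zeta>. indicator I \<zeta> * (c::real))"
  by (rule integrable_mult_left) (rule integrable_real_indicator[OF I_sets I_fin])

lemma int_w: "integrable lborel (\<lambda>\<zeta>. indicator I \<zeta> * w x \<zeta>)"
proof -
  have "integrable lborel (\<lambda>\<zeta>. \<theta> * (indicator I \<zeta> * u x \<zeta>) - indicator I \<zeta> * v x \<zeta>)"
    using int_u int_v by auto
  then show ?thesis by (simp add: w_def algebra_simps)
qed

lemma int_uv: "integrable lborel (\<lambda>\<zeta>. indicator I \<zeta> * (\<theta> * u x \<zeta> - v y \<zeta>))"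
proof -
  have "integrable lborel (\<lambda>\<zeta>. \<theta> * (indicator I \<zeta> * u x \<zeta>) - indicator I \<zeta> * v y \<zeta>)"
    using int_u int_v by auto
  then show ?thesis by (simp add: algebra_simps)
qed

lemma k_sec_meas: assumes "\<xi> \<in> I" shows "(\<lambda>\<zeta>. indicator I \<zeta> * k \<xi> \<zeta>) \<in> borel_measurable lborel"
proof -
  have "(\<lambda>\<zeta>. (\<xi>, \<zeta>)) \<in> restrict_space borel I \<rightarrow>\<^sub>M restrict_space borel (I \<times> I)"
    by (rule measurable_restrict_space3) (use assms in auto)
  from measurable_comp[OF this k_meas]
  have "(\<lambda>\<zeta>. k \<xi> \<zeta>) \<in> borel_measurable (restrict_space borel I)" by (simp add: comp_def)
  then have "(\<lambda>\<zeta>. indicator I \<zeta> *\<^sub>R k \<xi> \<zeta>) \<in> borel_measurable borel"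
    using I_sets by (subst (asm) borel_measurable_restrict_space_iff) auto
  then show ?thesis by (simp add: measurable_lborel1)
qed

lemma int_kmul:
  fixes g :: "real \<Rightarrow> real"
  assumes "\<xi> \<in> I" "integrable lborel (\<lambda>\<zeta>. indicator I \<zeta> * g \<zeta>)"
  shows "integrable lborel (\<lambda>\<zeta>. indicator I \<zeta> * (k \<xi> \<zeta> * g \<zeta>))"
proof (rule Bochner_Integration.integrable_bound[where f="\<lambda>\<zeta>. k1 * (indicator I \<zeta> * g \<zeta>)"])
  show "integrable lborel (\<lambda>\<zeta>. k1 * (indicator I \<zeta> * g \<zeta>))" using assms(2) by auto
  have "(\<lambda>\<zeta>. (indicator I \<zeta> * k \<xi> \<zeta>) * (indicator I \<zeta> * g \<zeta>)) \<in> borel_measurable lborel"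
    by (rule borel_measurable_times[OF k_sec_meas[OF assms(1)] borel_measurable_integrable[OF assms(2)]])
  then show "(\<lambda>\<zeta>. indicator I \<zeta> * (k \<xi> \<zeta> * g \<zeta>)) \<in> borel_measurable lborel"
    by (rule measurable_cong[THEN iffD1, rotated]) (auto simp: indicator_def)
  show "AE \<zeta> in lborel. norm (indicator I \<zeta> * (k \<xi> \<zeta> * g \<zeta>)) \<le> norm (k1 * (indicator I \<zeta> * g \<zeta>))"
  proof (intro AE_I2)
    fix \<zeta> show "norm (indicator I \<zeta> * (k \<xi> \<zeta> * g \<zeta>)) \<le> norm (k1 * (indicator I \<zeta> * g \<zeta>))"
    proof (cases "\<zeta> \<in> I")
      case True
      then have "0 \<le> k \<xi> \<zeta>" "k \<xi> \<zeta> \<le> k1" using k_bds(2)[OF assms(1) True] k_bds(1) by auto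
      then show ?thesis using True by (simp add: abs_mult mult_right_mono)
    qed simp
  qed
qed

lemma int_k: "\<xi> \<in> I \<Longrightarrow> integrable lborel (\<lambda>\<zeta>. indicator I \<zeta> * k \<xi> \<zeta>)"
  using int_kmul[OF _ int_const[of 1]] by simp

lemma Kint_bounds: assumes "\<xi> \<in> I"
  shows "0 \<le> (\<integral>\<zeta>. indicator I \<zeta> * k \<xi> \<zeta> \<partial>lborel)" "(\<integral>\<zeta>. indicator I \<zeta> * k \<xi> \<zeta> \<partial>lborel) \<le> k1"
proof -
  show "0 \<le> (\<integral>\<zeta>. indicator I \<zeta> * k \<xi> \<zeta> \<partial>lborel)"
    using k_bds assms by (intro integral_nonneg_AE AE_I2) (auto simp: indicator_def, smt (verit))
  have "(\<integral>\<zeta>. indicator I \<zeta> * k \<xi> \<zeta> \<partial>lborel) \<le> (\<integral>\<zeta>. indicator I \<zeta> * k1 \<partial>lborel)"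
  proof (intro integral_mono)
    fix \<zeta> show "indicator I \<zeta> * k \<xi> \<zeta> \<le> indicator I \<zeta> * k1"
      using k_bds assms by (cases "\<zeta> \<in> I") auto
  qed (use int_k assms int_const integrable_real_indicator[OF I_sets I_fin] in auto)
  also have "\<dots> = (\<integral>\<zeta>. indicator I \<zeta> \<partial>lborel) * k1" by (rule integral_mult_left_zero)
  also have "\<dots> = k1" using I_int(3) by simp
  finally show "(\<integral>\<zeta>. indicator I \<zeta> * k \<xi> \<zeta> \<partial>lborel) \<le> k1" .
qed


lemma tendsto_Q: "X \<longlonglongrightarrow> x \<Longrightarrow> (\<lambda>n. Q (X n)) \<longlonglongrightarrow> Q x"
  by (rule continuous_on_tendsto_compose[OF continuous_Q]) auto

lemma tendsto_DQ: "X \<longlonglongrightarrow> x \<Longrightarrow> (\<lambda>n. DQ (X n)) \<longlonglongrightarrow> DQ x"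
  by (rule continuous_on_tendsto_compose[OF continuous_DQ]) auto

lemma Zv_zero: "0 \<in> Zv" by (simp add: Zv_def)
lemma fl_neg_Zv: "- fl x \<in> Zv" by (rule Zv_minus[OF fl_Zv])

lemma int_kdiff: assumes "\<eta> \<in> I" "integrable lborel (\<lambda>\<zeta>. indicator I \<zeta> * g \<zeta>)"
  shows "integrable lborel (\<lambda>\<zeta>. indicator I \<zeta> * (k \<eta> \<zeta> * (c - g \<zeta>)))"
proof -
  have "integrable lborel (\<lambda>\<zeta>. indicator I \<zeta> * c - indicator I \<zeta> * g \<zeta>)"
    using int_const assms(2) by auto
  then have "integrable lborel (\<lambda>\<zeta>. indicator I \<zeta> * (c - g \<zeta>))" by (simp add: algebra_simps)
  from int_kmul[OF assms(1) this] show ?thesis .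
qed

lemma nl_eq: "nonlocal_term I k g x \<xi> = (\<integral>\<zeta>. indicator I \<zeta> * (k \<xi> \<zeta> * (g x \<xi> - g x \<zeta>)) \<partial>lborel)"
  by (simp add: nonlocal_term_def set_lebesgue_integral_def)

lemma key:
  assumes eta: "\<eta> \<in> I" and mx: "\<And>x. w x \<eta> \<le> w x0 \<eta>"
  shows "(\<integral>\<zeta>. indicator I \<zeta> * (k \<eta> \<zeta> * (w x0 \<eta> - w x0 \<zeta>)) \<partial>lborel) \<le> -(1-\<theta>) * f x0 \<eta>"
proof -
  define w0 where "w0 = w x0 \<eta>"
  define Bw where "Bw = \<theta> * Mu + Mv"
  define K where "K = cbox (0::real^'n) 1"
  define \<Phi> where "\<Phi> n p = \<theta> * u (fst p) \<eta> - v (snd p) \<eta> - real (Suc n) * Q (fst p - snd p) - Q (fst p - x0)" for n p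
  have uvB: "\<theta> * u x \<eta> - v y \<eta> \<le> Bw" for x y
    using u_bdd[OF eta, of x] v_bdd[OF eta, of y] theta unfolding Bw_def by (smt (verit) mult_left_mono)
  have \<Phi>_le: "\<Phi> n p \<le> Bw" for n p
    using uvB[of "fst p" "snd p"] Q_nonneg[of "fst p - snd p"] Q_nonneg[of "fst p - x0"]
    unfolding \<Phi>_def by (smt (verit) of_nat_0_le_iff mult_nonneg_nonneg)
  have \<Phi>_per: "\<Phi> n (x, y) = \<Phi> n (x - fl x, y - fl y)" for n x y
  proof -
    have "u (x - fl x) \<eta> = u x \<eta>" by (rule u_per') (simp add: fl_neg_Zv)
    moreover have "v (y - fl y) \<eta> = v y \<eta>" by (rule v_per') (simp add: fl_neg_Zv)
    moreover have "Q ((x - fl x) - (y - fl y)) = Q (x - y)"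
      using Q_per[OF Zv_diff[OF fl_Zv fl_Zv, of y x], of "x - y"] by (simp add: algebra_simps)
    moreover have "Q ((x - fl x) - x0) = Q (x - x0)"
      using Q_per[OF fl_neg_Zv, of "x - x0" x] by (simp add: algebra_simps)
    ultimately show ?thesis by (simp add: \<Phi>_def)
  qed
  have "\<exists>p\<in>K\<times>K. \<forall>q\<in>K\<times>K. \<Phi> n q \<le> \<Phi> n p" for n
  proof (rule susc_max)
    show "compact (K \<times> K)" unfolding K_def by (intro compact_Times compact_cbox)
    show "K \<times> K \<noteq> {}" unfolding K_def using frac_cbox[of 0] by blast
    show "\<And>x. x \<in> K \<times> K \<Longrightarrow> \<Phi> n x \<le> Bw" by (rule \<Phi>_le)
    have c: "continuous_on UNIV (\<lambda>p::(real^'n)\<times>(real^'n). - real (Suc n) * Q (fst p - snd p) - Q (fst p - x0))"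
      by (intro continuous_intros continuous_on_compose2[OF continuous_Q]) auto
    have "susc (\<lambda>p. (\<theta> * u (fst p) \<eta> - v (snd p) \<eta>) + (- real (Suc n) * Q (fst p - snd p) - Q (fst p - x0)))"
      by (rule susc_add[OF pair_susc[OF eta] susc_cont[OF c]])
    then show "susc (\<Phi> n)" unfolding \<Phi>_def by (simp add: algebra_simps)
  qed
  then obtain ab where ab: "\<And>n. ab n \<in> K\<times>K" "\<And>n q. q \<in> K\<times>K \<Longrightarrow> \<Phi> n q \<le> \<Phi> n (ab n)" by metis
  define a where "a n = fst (ab n)" for n
  define b where "b n = snd (ab n)" for n
  have glob: "\<Phi> n (x, y) \<le> \<Phi> n (a n, b n)" for n x y
  proof -
    have "x - fl x \<in> K" "y - fl y \<in> K" unfolding K_def by (rule frac_cbox)+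
    then have "\<Phi> n (x - fl x, y - fl y) \<le> \<Phi> n (ab n)" using ab(2) by auto
    then show ?thesis using \<Phi>_per by (simp add: a_def b_def)
  qed
  define D where "D n = \<theta> * u (a n) \<eta> - v (b n) \<eta>" for n
  have \<Phi>00: "\<Phi> n (x0, x0) = w0" for n
    by (simp add: \<Phi>_def w0_def w_def Q_zero_Zv[OF Zv_zero])
  have D_low: "w0 + real (Suc n) * Q (a n - b n) + Q (a n - x0) \<le> D n" for n
    using glob[of n x0 x0] \<Phi>00[of n] by (simp add: \<Phi>_def D_def)
  have Qab: "real (Suc n) * Q (a n - b n) \<le> Bw - w0" for n
    using D_low[of n] uvB[of "a n" "b n"] Q_nonneg[of "a n - x0"] by (simp add: D_def)
  have D_ge: "w0 \<le> D n" for n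
    using D_low[of n] Q_nonneg[of "a n - b n"] Q_nonneg[of "a n - x0"] by (smt (verit) of_nat_0_le_iff mult_nonneg_nonneg)
  have "seq_compact (K \<times> K)" unfolding K_def by (intro compact_imp_seq_compact compact_Times compact_cbox)
  then obtain l r where l: "l \<in> K \<times> K" "strict_mono r" "(ab \<circ> r) \<longlonglongrightarrow> l"
    using ab(1) by (metis seq_compactE)
  define as where "as = fst l"
  define bs where "bs = snd l"
  have a_lim: "(\<lambda>n. a (r n)) \<longlonglongrightarrow> as" using tendsto_fst[OF l(3)] by (simp add: a_def as_def comp_def)
  have b_lim: "(\<lambda>n. b (r n)) \<longlonglongrightarrow> bs" using tendsto_snd[OF l(3)] by (simp add: b_def bs_def comp_def)
  have ab_lim: "(\<lambda>n. (a (r n), b (r n))) \<longlonglongrightarrow> (as, bs)"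
    using l(3) by (simp add: a_def b_def as_def bs_def comp_def)
  have "Q (as - bs) \<le> 0"
  proof (rule tendsto_le[OF trivial_limit_sequentially])
    show "(\<lambda>n. Q (a (r n) - b (r n))) \<longlonglongrightarrow> Q (as - bs)" by (intro tendsto_Q tendsto_diff a_lim b_lim)
    show "(\<lambda>n. (Bw - w0) / real (Suc n)) \<longlonglongrightarrow> 0"
      by (rule LIMSEQ_Suc[OF lim_const_over_n])
    show "\<forall>\<^sub>F n in sequentially. Q (a (r n) - b (r n)) \<le> (Bw - w0) / real (Suc n)"
    proof (intro always_eventually allI)
      fix n
      have "n \<le> r n" using l(2) by (rule seq_suble)
      have "Bw - w0 \<ge> 0" using Qab[of 0] Q_nonneg[of "a 0 - b 0"] by (smt (verit) mult_nonneg_nonneg of_nat_0_le_iff)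
      have "Q (a (r n) - b (r n)) \<le> (Bw - w0) / real (Suc (r n))"
        using Qab[of "r n"] by (simp add: field_simps)
      also have "\<dots> \<le> (Bw - w0) / real (Suc n)"
        using \<open>n \<le> r n\<close> \<open>Bw - w0 \<ge> 0\<close> by (intro divide_left_mono) auto
      finally show "Q (a (r n) - b (r n)) \<le> (Bw - w0) / real (Suc n)" .
    qed
  qed
  then have "Q (as - bs) = 0" using Q_nonneg[of "as - bs"] by simp
  then have asbs: "as - bs \<in> Zv" by (rule Q_zero)
  have "Q (as - x0) \<le> 0"
  proof (rule ccontr)
    assume "\<not> Q (as - x0) \<le> 0"
    then have q: "Q (as - x0) > 0" by simp
    have "w as \<eta> \<le> w0" using mx unfolding w0_def by blast
    moreover have "v bs \<eta> = v as \<eta>" by (rule v_per') (use Zv_minus[OF asbs] in \<open>simp add: algebra_simps\<close>)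
    ultimately have "\<theta> * u as \<eta> - v bs \<eta> < w0 + Q (as - x0) / 2" using q by (simp add: w_def)
    then have ev1: "\<forall>\<^sub>F n in sequentially. \<theta> * u (a (r n)) \<eta> - v (b (r n)) \<eta> < w0 + Q (as - x0) / 2"
      using pair_susc[OF eta] ab_lim unfolding susc_def by fastforce
    have "(\<lambda>n. Q (a (r n) - x0)) \<longlonglongrightarrow> Q (as - x0)" by (intro tendsto_Q tendsto_diff a_lim tendsto_const)
    then have ev2: "\<forall>\<^sub>F n in sequentially. Q (a (r n) - x0) > Q (as - x0) / 2"
      using q by (intro order_tendstoD(1)) auto
    from ev1 ev2 have "\<forall>\<^sub>F n in sequentially. False"
    proof eventually_elim
      case (elim n)
      then show ?case using D_low[of "r n"] Q_nonneg[of "a (r n) - b (r n)"] unfolding D_def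
        by (smt (verit) of_nat_0_le_iff mult_nonneg_nonneg)
    qed
    then show False by simp
  qed
  then have "Q (as - x0) = 0" using Q_nonneg[of "as - x0"] by simp
  then have asx0: "as - x0 \<in> Zv" by (rule Q_zero)
  have bsx0: "bs - x0 \<in> Zv" using Zv_diff[OF asx0 asbs] by (simp add: algebra_simps)
  define N where "N n = real (Suc n)" for n
  define p where "p n = N n *\<^sub>R DQ (a n - b n)" for n
  define rr where "rr n = DQ (a n - x0)" for n
  define g where "g n \<zeta> = \<theta> * u (a n) \<zeta> - v (b n) \<zeta>" for n \<zeta>
  define Keta where "Keta = (\<integral>\<zeta>. indicator I \<zeta> * k \<eta> \<zeta> \<partial>lborel)"
  define NLu where "NLu n = nonlocal_term I k u (a n) \<eta>" for n
  define NLv where "NLv n = nonlocal_term I k v (b n) \<eta>" for n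
  have Kb: "0 \<le> Keta" "Keta \<le> k1" using Kint_bounds[OF eta] by (simp_all add: Keta_def)
  have subi: "F (a n) ((1/\<theta>) *\<^sub>R (p n + rr n)) \<eta> + NLu n \<le> f (a n) \<eta>" for n
  proof -
    let ?\<phi> = "\<lambda>y. (v (b n) \<eta> + N n * Q (y - b n) + Q (y - x0)) / \<theta>"
    let ?D = "\<lambda>y. (1/\<theta>) *\<^sub>R (N n *\<^sub>R DQ (y - b n) + DQ (y - x0))"
    have C: "C1_test ?\<phi> ?D" by (rule C1_sub[OF theta(1)])
    have lm: "\<exists>e>0. \<forall>y. dist y (a n) < e \<longrightarrow> u y \<eta> - ?\<phi> y \<le> u (a n) \<eta> - ?\<phi> (a n)"
    proof (intro exI[of _ 1] conjI allI impI)
      fix y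
      have e: "u z \<eta> - ?\<phi> z = \<Phi> n (z, b n) / \<theta>" for z
        using theta(1) by (simp add: \<Phi>_def N_def field_simps)
      show "u y \<eta> - ?\<phi> y \<le> u (a n) \<eta> - ?\<phi> (a n)"
        unfolding e using glob[of n y "b n"] theta(1) by (simp add: divide_right_mono)
    qed simp
    from u_sub C eta lm have "F (a n) (?D (a n)) \<eta> + nonlocal_term I k u (a n) \<eta> \<le> f (a n) \<eta>"
      unfolding viscosity_subsolution_def by blast
    then show ?thesis by (simp add: p_def rr_def NLu_def)
  qed
  have superi: "f (b n) \<eta> \<le> F (b n) (p n) \<eta> + NLv n" for n
  proof -
    let ?\<psi> = "\<lambda>y. \<theta> * u (a n) \<eta> - N n * Q (a n - y) - Q (a n - x0)"
    let ?D = "\<lambda>y. N n *\<^sub>R DQ (a n - y)"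
    have C: "C1_test ?\<psi> ?D" by (rule C1_super)
    have lm: "\<exists>e>0. \<forall>y. dist y (b n) < e \<longrightarrow> v y \<eta> - ?\<psi> y \<ge> v (b n) \<eta> - ?\<psi> (b n)"
    proof (intro exI[of _ 1] conjI allI impI)
      fix y
      have e: "v z \<eta> - ?\<psi> z = - \<Phi> n (a n, z)" for z
        by (simp add: \<Phi>_def N_def field_simps)
      show "v y \<eta> - ?\<psi> y \<ge> v (b n) \<eta> - ?\<psi> (b n)"
        unfolding e using glob[of n "a n" y] by simp
    qed simp
    from v_super C eta lm have "F (b n) (?D (b n)) \<eta> + nonlocal_term I k v (b n) \<eta> \<ge> f (b n) \<eta>"
      unfolding viscosity_supersolution_def by blast
    then show ?thesis by (simp add: p_def NLv_def)
  qed
  have convx: "F (a n) (p n + rr n) \<eta> \<le> \<theta> * F (a n) ((1/\<theta>) *\<^sub>R (p n + rr n)) \<eta>" for n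
  proof -
    have "F (a n) ((1 - \<theta>) *\<^sub>R 0 + \<theta> *\<^sub>R ((1/\<theta>) *\<^sub>R (p n + rr n))) \<eta>
        \<le> (1 - \<theta>) * F (a n) 0 \<eta> + \<theta> * F (a n) ((1/\<theta>) *\<^sub>R (p n + rr n)) \<eta>"
      using theta by (intro convex_onD[OF A3[OF eta]]) auto
    then show ?thesis using theta A4[OF eta] by simp
  qed
  define IKu where "IKu n = (\<integral>\<zeta>. indicator I \<zeta> * (k \<eta> \<zeta> * u (a n) \<zeta>) \<partial>lborel)" for n
  define IKv where "IKv n = (\<integral>\<zeta>. indicator I \<zeta> * (k \<eta> \<zeta> * v (b n) \<zeta>) \<partial>lborel)" for n
  define IKg where "IKg n = (\<integral>\<zeta>. indicator I \<zeta> * (k \<eta> \<zeta> * g n \<zeta>) \<partial>lborel)" for n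
  have iku: "integrable lborel (\<lambda>\<zeta>. indicator I \<zeta> * (k \<eta> \<zeta> * u x \<zeta>))" for x
    by (rule int_kmul[OF eta int_u])
  have ikv: "integrable lborel (\<lambda>\<zeta>. indicator I \<zeta> * (k \<eta> \<zeta> * v x \<zeta>))" for x
    by (rule int_kmul[OF eta int_v])
  have ik: "integrable lborel (\<lambda>\<zeta>. indicator I \<zeta> * k \<eta> \<zeta>)" by (rule int_k[OF eta])
  have NLu_eq: "NLu n = u (a n) \<eta> * Keta - IKu n" for n
  proof -
    have "NLu n = (\<integral>\<zeta>. u (a n) \<eta> * (indicator I \<zeta> * k \<eta> \<zeta>) - indicator I \<zeta> * (k \<eta> \<zeta> * u (a n) \<zeta>) \<partial>lborel)"
      unfolding NLu_def nl_eq by (rule Bochner_Integration.integral_cong) (auto simp: algebra_simps)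
    also have "\<dots> = u (a n) \<eta> * Keta - IKu n"
      using ik iku by (simp add: Keta_def IKu_def)
    finally show ?thesis .
  qed
  have NLv_eq: "NLv n = v (b n) \<eta> * Keta - IKv n" for n
  proof -
    have "NLv n = (\<integral>\<zeta>. v (b n) \<eta> * (indicator I \<zeta> * k \<eta> \<zeta>) - indicator I \<zeta> * (k \<eta> \<zeta> * v (b n) \<zeta>) \<partial>lborel)"
      unfolding NLv_def nl_eq by (rule Bochner_Integration.integral_cong) (auto simp: algebra_simps)
    also have "\<dots> = v (b n) \<eta> * Keta - IKv n"
      using ik ikv by (simp add: Keta_def IKv_def)
    finally show ?thesis .
  qed
  have IKg_eq: "IKg n = \<theta> * IKu n - IKv n" for n
  proof -
    have "IKg n = (\<integral>\<zeta>. \<theta> * (indicator I \<zeta> * (k \<eta> \<zeta> * u (a n) \<zeta>)) - indicator I \<zeta> * (k \<eta> \<zeta> * v (b n) \<zeta>) \<partial>lborel)"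
      unfolding IKg_def g_def by (rule Bochner_Integration.integral_cong) (auto simp: algebra_simps)
    also have "\<dots> = \<theta> * IKu n - IKv n" using iku ikv by (simp add: IKu_def IKv_def)
    finally show ?thesis .
  qed
  have main_ineq: "F (a n) (p n + rr n) \<eta> - F (b n) (p n) \<eta> + (w0 * Keta - IKg n) \<le> \<theta> * f (a n) \<eta> - f (b n) \<eta>" for n
  proof -
    have "w0 * Keta \<le> D n * Keta" using D_ge[of n] Kb(1) by (rule mult_right_mono)
    moreover have "F (a n) (p n + rr n) \<eta> \<le> \<theta> * (f (a n) \<eta> - NLu n)"
      using convx[of n] subi[of n] theta(1) by (smt (verit) mult_left_mono)
    moreover note superi[of n]
    moreover have "\<theta> * NLu n - NLv n = D n * Keta - IKg n"
      unfolding NLu_eq NLv_eq IKg_eq D_def by (simp add: algebra_simps)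
    ultimately show ?thesis by (simp add: algebra_simps)
  qed
  define L where "L = (w0 - Mv) / \<theta>"
  have u_low: "L \<le> u (a n) \<eta>" for n
  proof -
    have "w0 - Mv \<le> \<theta> * u (a n) \<eta>" using D_ge[of n] v_bdd[OF eta, of "b n"] by (simp add: D_def)
    then show ?thesis unfolding L_def using theta(1) by (simp add: divide_le_eq mult.commute)
  qed
  have IKu_le: "IKu n \<le> Mu * Keta" for n
  proof -
    have "IKu n \<le> (\<integral>\<zeta>. indicator I \<zeta> * (k \<eta> \<zeta> * Mu) \<partial>lborel)"
      unfolding IKu_def
    proof (intro integral_mono iku int_kmul[OF eta int_const])
      fix \<zeta> show "indicator I \<zeta> * (k \<eta> \<zeta> * u (a n) \<zeta>) \<le> indicator I \<zeta> * (k \<eta> \<zeta> * Mu)"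
      proof (cases "\<zeta> \<in> I")
        case True
        then have "0 \<le> k \<eta> \<zeta>" using k_bds(2)[OF eta True] k_bds(1) by auto
        then show ?thesis using True u_bdd[OF True, of "a n"] by (simp add: mult_left_mono)
      qed simp
    qed
    also have "\<dots> = Mu * Keta" unfolding Keta_def by (simp add: algebra_simps)
    finally show ?thesis .
  qed
  have NLu_low: "- \<bar>L - Mu\<bar> * k1 \<le> NLu n" for n
  proof -
    have "(L - Mu) * Keta \<le> NLu n" using u_low[of n] IKu_le[of n] Kb(1) unfolding NLu_eq
      by (smt (verit) mult_right_mono left_diff_distrib)
    moreover have "- \<bar>L - Mu\<bar> * Keta \<le> (L - Mu) * Keta" by (rule mult_right_mono) (use Kb in auto)
    moreover have "\<bar>L - Mu\<bar> * Keta \<le> \<bar>L - Mu\<bar> * k1" by (rule mult_left_mono) (use Kb in auto)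
    ultimately show ?thesis by linarith
  qed
  define R1 where "R1 = max 1 ((Bf + \<bar>L - Mu\<bar> * k1 + C2) / C1)"
  have Dphi_bnd: "norm ((1/\<theta>) *\<^sub>R (p n + rr n)) \<le> R1" for n
  proof -
    let ?q = "(1/\<theta>) *\<^sub>R (p n + rr n)"
    have "C1 * norm ?q powr m - C2 \<le> F (a n) ?q \<eta>" by (rule A1(4)[OF eta])
    also have "\<dots> \<le> f (a n) \<eta> - NLu n" using subi[of n] by simp
    also have "\<dots> \<le> Bf + \<bar>L - Mu\<bar> * k1" using f_bdd[OF eta, of "a n"] NLu_low[of n] by linarith
    finally have "norm ?q powr m \<le> (Bf + \<bar>L - Mu\<bar> * k1 + C2) / C1"
      using A1(1) by (simp add: field_simps)
    then show ?thesis unfolding R1_def by (rule powr_bound[OF A1(3) norm_ge_zero])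
  qed
  have prr_bnd: "norm (p n + rr n) \<le> R1" for n
  proof -
    have "norm (p n + rr n) = \<theta> * norm ((1/\<theta>) *\<^sub>R (p n + rr n))" using theta(1) by simp
    also have "\<dots> \<le> 1 * R1" using Dphi_bnd[of n] theta by (intro mult_mono) auto
    finally show ?thesis by simp
  qed
  define R where "R = R1 + 2 * pi * CARD('n) + 1"
  have R1_pos: "R1 \<ge> 1" unfolding R1_def by simp
  have Rpos: "R > 0" unfolding R_def using R1_pos by (smt (verit) pi_gt_zero of_nat_0_le_iff mult_nonneg_nonneg)
  have prr_lt: "norm (p n + rr n) < R" for n
    using prr_bnd[of n] unfolding R_def by (smt (verit) pi_gt_zero of_nat_0_le_iff mult_nonneg_nonneg)
  have p_lt: "norm (p n) < R" for n
  proof -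
    have "norm (p n) \<le> norm (p n + rr n) + norm (rr n)" by (metis add_diff_cancel_right' norm_triangle_ineq4)
    also have "\<dots> \<le> R1 + 2 * pi * CARD('n)" using prr_bnd[of n] norm_DQ[of "a n - x0"] by (simp add: rr_def)
    finally show ?thesis unfolding R_def by simp
  qed
  obtain \<omega> where om: "modulus \<omega>" and omF: "\<And>x y p q \<xi>. \<xi> \<in> I \<Longrightarrow> norm p < R \<Longrightarrow> norm q < R \<Longrightarrow>
                 \<bar>F x p \<xi> - F y q \<xi>\<bar> \<le> \<omega> (dist x y + dist p q)"
    using A5[OF Rpos] by blast
  define c where "c = as - bs"
  define sq where "sq n = dist (a n) (b n + c) + norm (rr n)" for n
  have Fdiff: "- \<omega> (sq n) \<le> F (a n) (p n + rr n) \<eta> - F (b n) (p n) \<eta>" for n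
  proof -
    have "F (b n + c) (p n) \<eta> = F (b n) (p n) \<eta>" by (rule F_per') (simp add: c_def asbs)
    moreover have "\<bar>F (a n) (p n + rr n) \<eta> - F (b n + c) (p n) \<eta>\<bar> \<le> \<omega> (dist (a n) (b n + c) + dist (p n + rr n) (p n))"
      by (rule omF[OF eta prr_lt p_lt])
    moreover have "dist (p n + rr n) (p n) = norm (rr n)" by (simp add: dist_norm)
    ultimately have "\<bar>F (a n) (p n + rr n) \<eta> - F (b n) (p n) \<eta>\<bar> \<le> \<omega> (sq n)"
      unfolding sq_def by simp
    then show ?thesis by (auto simp: abs_le_iff)
  qed
  have sq_lim: "(\<lambda>n. sq (r n)) \<longlonglongrightarrow> 0"
  proof -
    have "(\<lambda>n. sq (r n)) \<longlonglongrightarrow> dist as (bs + c) + norm (DQ (as - x0))"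
      unfolding sq_def rr_def by (intro tendsto_intros tendsto_DQ a_lim b_lim)
    moreover have "dist as (bs + c) + norm (DQ (as - x0)) = 0"
      using DQ_Zv[OF asx0] by (simp add: c_def)
    ultimately show ?thesis by simp
  qed
  have om_lim: "(\<lambda>n. \<omega> (sq (r n))) \<longlonglongrightarrow> 0"
    by (rule modulus_tendsto[OF om _ sq_lim]) (simp add: sq_def)
  have f_lim: "(\<lambda>n. \<theta> * f (a (r n)) \<eta> - f (b (r n)) \<eta>) \<longlonglongrightarrow> \<theta> * f x0 \<eta> - f x0 \<eta>"
  proof -
    have fa: "(\<lambda>n. f (a (r n)) \<eta>) \<longlonglongrightarrow> f as \<eta>"
      by (rule continuous_on_tendsto_compose[OF f_cont[OF eta] a_lim]) auto
    have fb: "(\<lambda>n. f (b (r n)) \<eta>) \<longlonglongrightarrow> f bs \<eta>"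
      by (rule continuous_on_tendsto_compose[OF f_cont[OF eta] b_lim]) auto
    have "f as \<eta> = f x0 \<eta>" "f bs \<eta> = f x0 \<eta>" using f_per' asx0 bsx0 by auto
    then show ?thesis using fa fb by (auto intro!: tendsto_intros)
  qed
  define Iw where "Iw = (\<integral>\<zeta>. indicator I \<zeta> * (k \<eta> \<zeta> * w x0 \<zeta>) \<partial>lborel)"
  have ikw: "integrable lborel (\<lambda>\<zeta>. indicator I \<zeta> * (k \<eta> \<zeta> * w x0 \<zeta>))" by (rule int_kmul[OF eta int_w])
  have fatou: "\<forall>\<^sub>F n in sequentially. IKg (r n) \<le> Iw + e" if e: "e > 0" for e
  proof -
    have "\<forall>\<^sub>F n in sequentially. (\<integral>\<zeta>. indicator I \<zeta> * (k \<eta> \<zeta> * g (r n) \<zeta>) \<partial>lborel)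
        \<le> (\<integral>\<zeta>. indicator I \<zeta> * (k \<eta> \<zeta> * w x0 \<zeta>) \<partial>lborel) + e"
    proof (rule rev_fatou[where D="\<lambda>\<zeta>. indicator I \<zeta> * (k1 * (Bw - w x0 \<zeta>))"])
      show "integrable lborel (\<lambda>\<zeta>. indicator I \<zeta> * (k \<eta> \<zeta> * g (r n) \<zeta>))" for n
        unfolding g_def by (rule int_kmul[OF eta int_uv])
      show "integrable lborel (\<lambda>\<zeta>. indicator I \<zeta> * (k \<eta> \<zeta> * w x0 \<zeta>))" by (rule ikw)
      have "integrable lborel (\<lambda>\<zeta>. k1 * (indicator I \<zeta> * Bw - indicator I \<zeta> * w x0 \<zeta>))"
        using int_const int_w by auto
      then show "integrable lborel (\<lambda>\<zeta>. indicator I \<zeta> * (k1 * (Bw - w x0 \<zeta>)))"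
        by (simp add: algebra_simps)
      show "0 \<le> indicator I \<zeta> * (k1 * (Bw - w x0 \<zeta>))" for \<zeta>
        using w_bdd[of \<zeta> x0] k1_nonneg by (cases "\<zeta> \<in> I") (auto simp: Bw_def)
      show "indicator I \<zeta> * (k \<eta> \<zeta> * g (r n) \<zeta>) - indicator I \<zeta> * (k \<eta> \<zeta> * w x0 \<zeta>)
          \<le> indicator I \<zeta> * (k1 * (Bw - w x0 \<zeta>))" for n \<zeta>
      proof (cases "\<zeta> \<in> I")
        case True
        have kz: "0 \<le> k \<eta> \<zeta>" "k \<eta> \<zeta> \<le> k1" using k_bds(2)[OF eta True] k_bds(1) by auto
        have gB: "g (r n) \<zeta> \<le> Bw"
          using u_bdd[OF True, of "a (r n)"] v_bdd[OF True, of "b (r n)"] theta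
          unfolding g_def Bw_def by (smt (verit) mult_left_mono)
        have wB: "w x0 \<zeta> \<le> Bw" using w_bdd[OF True] by (simp add: Bw_def)
        have "k \<eta> \<zeta> * (g (r n) \<zeta> - w x0 \<zeta>) \<le> k \<eta> \<zeta> * (Bw - w x0 \<zeta>)"
          using kz gB by (intro mult_left_mono) auto
        also have "\<dots> \<le> k1 * (Bw - w x0 \<zeta>)" using kz wB by (intro mult_right_mono) auto
        finally show ?thesis using True by (simp add: algebra_simps)
      qed simp
      show "\<forall>\<^sub>F n in sequentially. indicator I \<zeta> * (k \<eta> \<zeta> * g (r n) \<zeta>)
          \<le> indicator I \<zeta> * (k \<eta> \<zeta> * w x0 \<zeta>) + e'" if e': "e' > 0" for \<zeta> e'
      proof (cases "\<zeta> \<in> I")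
        case True
        have kz: "0 \<le> k \<eta> \<zeta>" "k \<eta> \<zeta> \<le> k1" using k_bds(2)[OF eta True] k_bds(1) by auto
        have "\<theta> * u as \<zeta> - v bs \<zeta> = w x0 \<zeta>"
          using u_per'[OF asx0] v_per'[OF bsx0] by (simp add: w_def)
        moreover have "e' / (k1 + 1) > 0" using e' k1_nonneg by simp
        ultimately have "\<theta> * u as \<zeta> - v bs \<zeta> < w x0 \<zeta> + e' / (k1 + 1)" by simp
        then have "\<forall>\<^sub>F n in sequentially. \<theta> * u (a (r n)) \<zeta> - v (b (r n)) \<zeta> < w x0 \<zeta> + e' / (k1 + 1)"
          using pair_susc[OF True] ab_lim unfolding susc_def by fastforce
        then show ?thesis
        proof eventually_elim
          case (elim n)
          then have "k \<eta> \<zeta> * g (r n) \<zeta> \<le> k \<eta> \<zeta> * (w x0 \<zeta> + e' / (k1 + 1))"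
            using kz unfolding g_def by (intro mult_left_mono) auto
          also have "\<dots> = k \<eta> \<zeta> * w x0 \<zeta> + k \<eta> \<zeta> * (e' / (k1 + 1))" by (simp add: algebra_simps)
          also have "k \<eta> \<zeta> * (e' / (k1 + 1)) \<le> e'"
          proof -
            have "k \<eta> \<zeta> * (e' / (k1 + 1)) \<le> (k1 + 1) * (e' / (k1 + 1))"
              using kz e' k1_nonneg by (intro mult_right_mono) auto
            also have "\<dots> = e'" using k1_nonneg by simp
            finally show ?thesis .
          qed
          finally show ?case using True by simp
        qed
      qed (use e' in simp)
      show "e > 0" by fact
    qed
    then show ?thesis by (simp add: IKg_def Iw_def)
  qed
  have goal_eq: "(\<integral>\<zeta>. indicator I \<zeta> * (k \<eta> \<zeta> * (w x0 \<eta> - w x0 \<zeta>)) \<partial>lborel) = w0 * Keta - Iw"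
  proof -
    have "(\<integral>\<zeta>. indicator I \<zeta> * (k \<eta> \<zeta> * (w x0 \<eta> - w x0 \<zeta>)) \<partial>lborel)
        = (\<integral>\<zeta>. w0 * (indicator I \<zeta> * k \<eta> \<zeta>) - indicator I \<zeta> * (k \<eta> \<zeta> * w x0 \<zeta>) \<partial>lborel)"
      by (rule Bochner_Integration.integral_cong) (auto simp: algebra_simps w0_def)
    also have "\<dots> = w0 * Keta - Iw" using ik ikw by (simp add: Keta_def Iw_def)
    finally show ?thesis .
  qed
  show ?thesis
  proof (rule ccontr)
    assume "\<not> ?thesis"
    then have gt: "w0 * Keta - Iw > \<theta> * f x0 \<eta> - f x0 \<eta>" unfolding goal_eq by (simp add: algebra_simps)
    define e where "e = (w0 * Keta - Iw - (\<theta> * f x0 \<eta> - f x0 \<eta>)) / 4"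
    have e: "e > 0" using gt by (simp add: e_def)
    have ev1: "\<forall>\<^sub>F n in sequentially. \<omega> (sq (r n)) < e" using om_lim e by (simp add: order_tendstoD(2))
    have ev2: "\<forall>\<^sub>F n in sequentially. \<theta> * f (a (r n)) \<eta> - f (b (r n)) \<eta> < \<theta> * f x0 \<eta> - f x0 \<eta> + e"
      using f_lim e by (intro order_tendstoD(2)) auto
    have ev3: "\<forall>\<^sub>F n in sequentially. IKg (r n) \<le> Iw + e" by (rule fatou[OF e])
    from ev1 ev2 ev3 have "\<forall>\<^sub>F n in sequentially. False"
    proof eventually_elim
      case (elim n)
      have "- \<omega> (sq (r n)) + (w0 * Keta - IKg (r n)) \<le> \<theta> * f (a (r n)) \<eta> - f (b (r n)) \<eta>"
        using main_ineq[of "r n"] Fdiff[of "r n"] by linarith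
      then show ?case using elim e_def gt by argo
    qed
    then show False by simp
  qed
qed


lemma exists_max: assumes "\<xi> \<in> I" shows "\<exists>xm. \<forall>x. w x \<xi> \<le> w xm \<xi>"
proof -
  have "\<exists>x\<in>cbox 0 1. \<forall>y\<in>cbox 0 1. w y \<xi> \<le> w x \<xi>"
    by (rule susc_max[where B="\<theta> * Mu + Mv"]) (use frac_cbox[of 0] w_susc[OF assms] w_bdd[OF assms] in auto)
  then obtain xm where xm: "\<forall>y\<in>cbox 0 1. w y \<xi> \<le> w xm \<xi>" by blast
  have "w x \<xi> \<le> w xm \<xi>" for x
  proof -
    have "w x \<xi> = w (x - fl x) \<xi>" by (rule w_per') (simp add: fl_Zv)
    also have "\<dots> \<le> w xm \<xi>" using xm frac_cbox by blast
    finally show ?thesis .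
  qed
  then show ?thesis by blast
qed

lemma AE_exists: assumes "AE x in lborel. x \<in> I \<longrightarrow> P x" shows "\<exists>x\<in>I. P x"
proof (rule ccontr)
  assume "\<not> (\<exists>x\<in>I. P x)"
  then have "AE x in lborel. x \<notin> I" using assms by auto
  then have "emeasure lborel I = 0"
    by (subst (asm) AE_iff_measurable[OF I_sets]) auto
  then show False using I_emeasure by simp
qed

lemma w_le:
  assumes on_Z: "\<And>x \<xi>. (x, \<xi>) \<in> Zset I f \<Longrightarrow> u x \<xi> \<le> v x \<xi>"
  shows "\<forall>x. \<forall>\<xi>\<in>I. w x \<xi> \<le> (1 - \<theta>) * Mv"
proof -
  have "\<forall>\<xi>\<in>I. \<exists>xm. \<forall>x. w x \<xi> \<le> w xm \<xi>" using exists_max by blast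
  from bchoice[OF this] obtain xm where xm0: "\<forall>\<xi>\<in>I. \<forall>x. w x \<xi> \<le> w (xm \<xi>) \<xi>" by (elim exE)
  have xm: "\<And>\<xi> x. \<xi> \<in> I \<Longrightarrow> w x \<xi> \<le> w (xm \<xi>) \<xi>" using xm0 by blast
  have Ine: "I \<noteq> {}" using I_emeasure by auto
  define M where "M = Sup ((\<lambda>\<xi>. w (xm \<xi>) \<xi>) ` I)"
  have bdd: "bdd_above ((\<lambda>\<xi>. w (xm \<xi>) \<xi>) ` I)" using w_bdd by (intro bdd_aboveI2) auto
  have wM: "w x \<xi> \<le> M" if "\<xi> \<in> I" for x \<xi>
  proof -
    have "w (xm \<xi>) \<xi> \<le> M" unfolding M_def using bdd that by (intro cSup_upper) auto
    then show ?thesis using xm[OF that, of x] by linarith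
  qed
  have "\<exists>\<xi>\<in>I. M - 1 / real (Suc n) < w (xm \<xi>) \<xi>" for n
  proof -
    have "M - 1 / real (Suc n) < M" by simp
    then show ?thesis unfolding M_def using Ine by (subst (asm) less_cSup_iff) (auto simp: bdd)
  qed
  then have "\<forall>n. \<exists>\<xi>. \<xi> \<in> I \<and> M - 1 / real (Suc n) < w (xm \<xi>) \<xi>" by blast
  from choice[OF this] obtain \<xi>s where \<xi>s0: "\<forall>n. \<xi>s n \<in> I \<and> M - 1 / real (Suc n) < w (xm (\<xi>s n)) (\<xi>s n)" by (elim exE)
  have \<xi>s: "\<And>n. \<xi>s n \<in> I" "\<And>n. M - 1 / real (Suc n) < w (xm (\<xi>s n)) (\<xi>s n)" using \<xi>s0 by auto
  define X where "X n = xm (\<xi>s n) - fl (xm (\<xi>s n))" for n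
  have XK: "X n \<in> cbox 0 1" for n unfolding X_def by (rule frac_cbox)
  have wX: "w (X n) \<zeta> = w (xm (\<xi>s n)) \<zeta>" for n \<zeta> unfolding X_def by (rule w_per') (simp add: fl_neg_Zv)
  have intM: "(\<integral>\<zeta>. indicator I \<zeta> * (M - w (X n) \<zeta>) \<partial>lborel) \<le> k1 / (k0 * real (Suc n))" for n
  proof -
    let ?\<xi> = "\<xi>s n"
    let ?m = "w (X n) ?\<xi>"
    have ix: "integrable lborel (\<lambda>\<zeta>. indicator I \<zeta> * (M - w (X n) \<zeta>))"
    proof -
      have "integrable lborel (\<lambda>\<zeta>. indicator I \<zeta> * M - indicator I \<zeta> * w (X n) \<zeta>)" using int_const int_w by auto
      then show ?thesis by (simp add: algebra_simps)
    qed
    have mx: "\<forall>x. w x ?\<xi> \<le> w (X n) ?\<xi>" using xm[OF \<xi>s(1)] wX by simp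
    have "(\<integral>\<zeta>. indicator I \<zeta> * (k ?\<xi> \<zeta> * (?m - w (X n) \<zeta>)) \<partial>lborel) \<le> -(1-\<theta>) * f (X n) ?\<xi>"
      by (rule key[OF \<xi>s(1)]) (use mx in blast)
    also have "\<dots> \<le> 0" using A2[OF \<xi>s(1), of "X n"] theta by (intro mult_nonpos_nonneg) auto
    finally have k1: "(\<integral>\<zeta>. indicator I \<zeta> * (k ?\<xi> \<zeta> * (?m - w (X n) \<zeta>)) \<partial>lborel) \<le> 0" .
    have "(\<integral>\<zeta>. indicator I \<zeta> * (k ?\<xi> \<zeta> * (M - w (X n) \<zeta>)) \<partial>lborel)
        = (M - ?m) * (\<integral>\<zeta>. indicator I \<zeta> * k ?\<xi> \<zeta> \<partial>lborel) + (\<integral>\<zeta>. indicator I \<zeta> * (k ?\<xi> \<zeta> * (?m - w (X n) \<zeta>)) \<partial>lborel)"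
    proof -
      have "(\<integral>\<zeta>. indicator I \<zeta> * (k ?\<xi> \<zeta> * (M - w (X n) \<zeta>)) \<partial>lborel)
          = (\<integral>\<zeta>. (M - ?m) * (indicator I \<zeta> * k ?\<xi> \<zeta>) + indicator I \<zeta> * (k ?\<xi> \<zeta> * (?m - w (X n) \<zeta>)) \<partial>lborel)"
        by (rule Bochner_Integration.integral_cong) (auto simp: algebra_simps)
      also have "\<dots> = (M - ?m) * (\<integral>\<zeta>. indicator I \<zeta> * k ?\<xi> \<zeta> \<partial>lborel) + (\<integral>\<zeta>. indicator I \<zeta> * (k ?\<xi> \<zeta> * (?m - w (X n) \<zeta>)) \<partial>lborel)"
        using int_k[OF \<xi>s(1)] int_kdiff[OF \<xi>s(1) int_w] by simp
      finally show ?thesis .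
    qed
    also have "\<dots> \<le> (1 / real (Suc n)) * k1 + 0"
    proof (rule add_mono[OF _ k1])
      have "M - ?m \<le> 1 / real (Suc n)" using \<xi>s(2)[of n] wX by simp
      moreover have "0 \<le> M - ?m" using wM[OF \<xi>s(1)] by simp
      ultimately show "(M - ?m) * (\<integral>\<zeta>. indicator I \<zeta> * k ?\<xi> \<zeta> \<partial>lborel) \<le> (1 / real (Suc n)) * k1"
        using Kint_bounds[OF \<xi>s(1)] by (intro mult_mono) auto
    qed
    finally have A: "(\<integral>\<zeta>. indicator I \<zeta> * (k ?\<xi> \<zeta> * (M - w (X n) \<zeta>)) \<partial>lborel) \<le> k1 / real (Suc n)" by simp
    have "k0 * (\<integral>\<zeta>. indicator I \<zeta> * (M - w (X n) \<zeta>) \<partial>lborel) = (\<integral>\<zeta>. k0 * (indicator I \<zeta> * (M - w (X n) \<zeta>)) \<partial>lborel)"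
      by simp
    also have "\<dots> \<le> (\<integral>\<zeta>. indicator I \<zeta> * (k ?\<xi> \<zeta> * (M - w (X n) \<zeta>)) \<partial>lborel)"
    proof (intro integral_mono)
      show "integrable lborel (\<lambda>\<zeta>. k0 * (indicator I \<zeta> * (M - w (X n) \<zeta>)))" using ix by simp
      show "integrable lborel (\<lambda>\<zeta>. indicator I \<zeta> * (k ?\<xi> \<zeta> * (M - w (X n) \<zeta>)))"
        by (rule int_kdiff[OF \<xi>s(1) int_w])
      fix \<zeta> show "k0 * (indicator I \<zeta> * (M - w (X n) \<zeta>)) \<le> indicator I \<zeta> * (k ?\<xi> \<zeta> * (M - w (X n) \<zeta>))"
      proof (cases "\<zeta> \<in> I")
        case True
        then show ?thesis using k_bds(2)[OF \<xi>s(1) True] wM[OF True, of "X n"] by (simp add: mult_right_mono)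
      qed simp
    qed
    also have "\<dots> \<le> k1 / real (Suc n)" by (rule A)
    finally have B: "k0 * (\<integral>\<zeta>. indicator I \<zeta> * (M - w (X n) \<zeta>) \<partial>lborel) \<le> k1 / real (Suc n)" .
    have "(\<integral>\<zeta>. indicator I \<zeta> * (M - w (X n) \<zeta>) \<partial>lborel) \<le> (k1 / real (Suc n)) / k0"
      using B k_bds(1) by (simp add: le_divide_eq ac_simps)
    then show ?thesis by (simp add: divide_divide_eq_left mult.commute)
  qed
  have "seq_compact (cbox (0::real^'n) 1)" by (intro compact_imp_seq_compact compact_cbox)
  then obtain xs r where xs: "xs \<in> cbox 0 1" "strict_mono r" "(X \<circ> r) \<longlonglongrightarrow> xs"
    using XK by (metis seq_compactE)
  have Xlim: "(\<lambda>n. X (r n)) \<longlonglongrightarrow> xs" using xs(3) by (simp add: comp_def)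
  have ixs: "integrable lborel (\<lambda>\<zeta>. indicator I \<zeta> * (M - w xs \<zeta>))"
  proof -
    have "integrable lborel (\<lambda>\<zeta>. indicator I \<zeta> * M - indicator I \<zeta> * w xs \<zeta>)" using int_const int_w by auto
    then show ?thesis by (simp add: algebra_simps)
  qed
  have int0: "(\<integral>\<zeta>. indicator I \<zeta> * (M - w xs \<zeta>) \<partial>lborel) \<le> 0"
  proof (rule field_le_epsilon)
    fix e :: real assume e: "e > 0"
    have "\<forall>\<^sub>F n in sequentially. (\<integral>\<zeta>. indicator I \<zeta> * (w (X (r n)) \<zeta> - M) \<partial>lborel)
        \<le> (\<integral>\<zeta>. indicator I \<zeta> * (w xs \<zeta> - M) \<partial>lborel) + e / 2"
    proof (rule rev_fatou[where D="\<lambda>\<zeta>. indicator I \<zeta> * (M - w xs \<zeta>)"])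
      show "integrable lborel (\<lambda>\<zeta>. indicator I \<zeta> * (w (X (r n)) \<zeta> - M))" for n
      proof -
        have "integrable lborel (\<lambda>\<zeta>. indicator I \<zeta> * w (X (r n)) \<zeta> - indicator I \<zeta> * M)" using int_const int_w by auto
        then show ?thesis by (simp add: algebra_simps)
      qed
      show "integrable lborel (\<lambda>\<zeta>. indicator I \<zeta> * (w xs \<zeta> - M))"
      proof -
        have "integrable lborel (\<lambda>\<zeta>. indicator I \<zeta> * w xs \<zeta> - indicator I \<zeta> * M)" using int_const int_w by auto
        then show ?thesis by (simp add: algebra_simps)
      qed
      show "integrable lborel (\<lambda>\<zeta>. indicator I \<zeta> * (M - w xs \<zeta>))" by (rule ixs)
      show "indicator I \<zeta> * (w (X (r n)) \<zeta> - M) - indicator I \<zeta> * (w xs \<zeta> - M) \<le> indicator I \<zeta> * (M - w xs \<zeta>)" for n \<zeta>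
        using wM[of \<zeta> "X (r n)"] by (cases "\<zeta> \<in> I") auto
      show "0 \<le> indicator I \<zeta> * (M - w xs \<zeta>)" for \<zeta>
        using wM[of \<zeta> xs] by (cases "\<zeta> \<in> I") auto
      show "\<forall>\<^sub>F n in sequentially. indicator I \<zeta> * (w (X (r n)) \<zeta> - M) \<le> indicator I \<zeta> * (w xs \<zeta> - M) + e'"
        if e': "e' > 0" for \<zeta> e'
      proof (cases "\<zeta> \<in> I")
        case True
        have "w xs \<zeta> < w xs \<zeta> + e'" using e' by simp
        then have "\<forall>\<^sub>F n in sequentially. w (X (r n)) \<zeta> < w xs \<zeta> + e'"
          using w_susc[OF True] Xlim unfolding susc_def by blast
        then show ?thesis by eventually_elim (use True in auto)
      qed (use e' in simp)
      show "e / 2 > 0" using e by simp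
    qed
    moreover have "\<forall>\<^sub>F n in sequentially. k1 / (k0 * real (Suc n)) < e / 2"
    proof -
      have "(\<lambda>n. (k1 / k0) / real (Suc n)) \<longlonglongrightarrow> 0" by (rule LIMSEQ_Suc[OF lim_const_over_n])
      then have "\<forall>\<^sub>F n in sequentially. (k1 / k0) / real (Suc n) < e / 2" using e by (intro order_tendstoD(2)) auto
      then show ?thesis by (simp add: field_simps)
    qed
    ultimately have "\<forall>\<^sub>F n in sequentially. (\<integral>\<zeta>. indicator I \<zeta> * (M - w xs \<zeta>) \<partial>lborel) \<le> e"
    proof eventually_elim
      case (elim n)
      have "k1 / (k0 * real (Suc (r n))) \<le> k1 / (k0 * real (Suc n))"
        using seq_suble[OF xs(2), of n] k_bds(1) k1_nonneg
        by (intro divide_left_mono mult_left_mono mult_pos_pos) auto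
      moreover have "(\<integral>\<zeta>. indicator I \<zeta> * (w (X (r n)) \<zeta> - M) \<partial>lborel) = - (\<integral>\<zeta>. indicator I \<zeta> * (M - w (X (r n)) \<zeta>) \<partial>lborel)"
        by (subst integral_minus[symmetric]) (rule Bochner_Integration.integral_cong, auto simp: algebra_simps)
      moreover have "(\<integral>\<zeta>. indicator I \<zeta> * (w xs \<zeta> - M) \<partial>lborel) = - (\<integral>\<zeta>. indicator I \<zeta> * (M - w xs \<zeta>) \<partial>lborel)"
        by (subst integral_minus[symmetric]) (rule Bochner_Integration.integral_cong, auto simp: algebra_simps)
      ultimately show ?case using elim intM[of "r n"] by linarith
    qed
    then show "(\<integral>\<zeta>. indicator I \<zeta> * (M - w xs \<zeta>) \<partial>lborel) \<le> 0 + e" by simp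
  qed
  have "AE \<zeta> in lborel. indicator I \<zeta> * (M - w xs \<zeta>) = 0"
  proof (subst integral_nonneg_eq_0_iff_AE[symmetric])
    show "integrable lborel (\<lambda>\<zeta>. indicator I \<zeta> * (M - w xs \<zeta>))" by (rule ixs)
    show "AE \<zeta> in lborel. 0 \<le> indicator I \<zeta> * (M - w xs \<zeta>)"
      using wM by (intro AE_I2) (auto simp: indicator_def)
    show "(\<integral>\<zeta>. indicator I \<zeta> * (M - w xs \<zeta>) \<partial>lborel) = 0"
    proof -
      have "0 \<le> (\<integral>\<zeta>. indicator I \<zeta> * (M - w xs \<zeta>) \<partial>lborel)"
        using wM by (intro integral_nonneg_AE AE_I2) (auto simp: indicator_def)
      then show ?thesis using int0 by linarith
    qed
  qed
  then have AEM: "AE \<zeta> in lborel. \<zeta> \<in> I \<longrightarrow> w xs \<zeta> = M"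
    by eventually_elim (auto simp: indicator_def)
  have AEf: "AE \<zeta> in lborel. \<zeta> \<in> I \<longrightarrow> f xs \<zeta> = 0"
    using AEM
  proof eventually_elim
    case (elim \<zeta>)
    show ?case
    proof
      assume zI: "\<zeta> \<in> I"
      then have wz: "w xs \<zeta> = M" using elim by simp
      have mx: "\<And>x. w x \<zeta> \<le> w xs \<zeta>" using wM[OF zI] wz by simp
      have "(\<integral>\<zeta>'. indicator I \<zeta>' * (k \<zeta> \<zeta>' * (w xs \<zeta> - w xs \<zeta>')) \<partial>lborel) \<le> -(1-\<theta>) * f xs \<zeta>"
        by (rule key[OF zI mx])
      moreover have "(\<integral>\<zeta>'. indicator I \<zeta>' * (k \<zeta> \<zeta>' * (w xs \<zeta> - w xs \<zeta>')) \<partial>lborel) = (\<integral>\<zeta>'. 0 \<partial>(lborel::real measure))"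
      proof (rule Bochner_Integration.integral_cong_AE)
        show "(\<lambda>\<zeta>'. indicator I \<zeta>' * (k \<zeta> \<zeta>' * (w xs \<zeta> - w xs \<zeta>'))) \<in> borel_measurable lborel"
          by (rule borel_measurable_integrable[OF int_kdiff[OF zI int_w]])
        show "(\<lambda>\<zeta>'::real. 0::real) \<in> borel_measurable lborel" by simp
        show "AE \<zeta>' in lborel. indicator I \<zeta>' * (k \<zeta> \<zeta>' * (w xs \<zeta> - w xs \<zeta>')) = 0"
          using AEM by eventually_elim (use wz in \<open>auto simp: indicator_def\<close>)
      qed
      ultimately have "0 \<le> (\<theta> - 1) * f xs \<zeta>" by simp
      then have "(1 - \<theta>) * f xs \<zeta> \<le> 0" by (simp add: algebra_simps)
      moreover have "0 < 1 - \<theta>" using theta by simp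
      ultimately have "f xs \<zeta> \<le> 0" by (metis mult_le_0_iff not_le order_less_imp_le)
      then show "f xs \<zeta> = 0" using A2[OF zI, of xs] by simp
    qed
  qed
  have xsA: "xs \<in> A_tilde I f" using AEf by (simp add: A_tilde_def)
  have "AE \<zeta> in lborel. \<zeta> \<in> I \<longrightarrow> w xs \<zeta> = M \<and> f xs \<zeta> = 0" using AEM AEf by eventually_elim auto
  then have "\<exists>\<zeta>\<in>I. w xs \<zeta> = M \<and> f xs \<zeta> = 0" by (rule AE_exists)
  then obtain \<zeta> where z: "\<zeta> \<in> I" "w xs \<zeta> = M" "f xs \<zeta> = 0" by blast
  have "(xs, \<zeta>) \<in> Zset I f" using xsA z by (simp add: Zset_def)
  then have uv: "u xs \<zeta> \<le> v xs \<zeta>" by (rule on_Z)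
  have "M = \<theta> * u xs \<zeta> - v xs \<zeta>" using z by (simp add: w_def)
  also have "\<dots> \<le> \<theta> * v xs \<zeta> - v xs \<zeta>" using mult_left_mono[OF uv, of \<theta>] theta by simp
  also have "\<dots> = (1 - \<theta>) * (- v xs \<zeta>)" by (simp add: algebra_simps)
  also have "\<dots> \<le> (1 - \<theta>) * Mv" using v_bdd[OF z(1)] theta by (intro mult_left_mono) auto
  finally have "M \<le> (1 - \<theta>) * Mv" .
  then show ?thesis
  proof (intro allI ballI)
    fix x \<xi> assume "\<xi> \<in> I"
    then show "w x \<xi> \<le> (1 - \<theta>) * Mv" using wM[OF \<open>\<xi> \<in> I\<close>, of x] \<open>M \<le> (1 - \<theta>) * Mv\<close> by linarith
  qed
qed
end

theorem theorem4p2: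
  fixes I :: "real set" and k :: "real \<Rightarrow> real \<Rightarrow> real"
    and F :: "real^'n \<Rightarrow> real^'n \<Rightarrow> real \<Rightarrow> real"
    and f u v :: "real^'n \<Rightarrow> real \<Rightarrow> real"
    and k0 k1 C1 C2 m :: real
  assumes I_int: "is_interval I" "bounded I" "measure lborel I = 1"
    and k_meas: "(\<lambda>p. k (fst p) (snd p)) \<in> borel_measurable (restrict_space borel (I \<times> I))"
    and k_bds: "0 < k0" "\<And>\<xi> \<eta>. \<xi> \<in> I \<Longrightarrow> \<eta> \<in> I \<Longrightarrow> k0 \<le> k \<xi> \<eta> \<and> k \<xi> \<eta> \<le> k1"
    and F_per: "\<And>p \<xi>. periodic_fn (\<lambda>x. F x p \<xi>)"
    and F_cont: "\<And>\<xi>. \<xi> \<in> I \<Longrightarrow> continuous_on UNIV (\<lambda>(x, p). F x p \<xi>)"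
    and F_meas: "\<And>x p. F x p \<in> borel_measurable (restrict_space borel I)"
    and F_bdd: "\<And>p. \<exists>B. \<forall>x. \<forall>\<xi>\<in>I. \<bar>F x p \<xi>\<bar> \<le> B"
    and f_per: "\<And>\<xi>. periodic_fn (\<lambda>x. f x \<xi>)"
    and f_cont: "\<And>\<xi>. \<xi> \<in> I \<Longrightarrow> continuous_on UNIV (\<lambda>x. f x \<xi>)"
    and f_meas: "\<And>x. f x \<in> borel_measurable (restrict_space borel I)"
    and f_bdd: "\<exists>B. \<forall>x. \<forall>\<xi>\<in>I. \<bar>f x \<xi>\<bar> \<le> B"
    and A1: "C1 > 0" "C2 > 0" "m > 1"
      "\<And>x p \<xi>. \<xi> \<in> I \<Longrightarrow> C1 * norm p powr m - C2 \<le> F x p \<xi>"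
    and A2: "\<And>x \<xi>. \<xi> \<in> I \<Longrightarrow> f x \<xi> \<ge> 0" "{x. \<forall>\<xi>\<in>I. f x \<xi> = 0} \<noteq> {}"
    and A3: "\<And>x \<xi>. \<xi> \<in> I \<Longrightarrow> convex_on UNIV (\<lambda>p. F x p \<xi>)"
    and A4: "\<And>x p \<xi>. \<xi> \<in> I \<Longrightarrow> F x p \<xi> \<ge> 0" "\<And>x \<xi>. \<xi> \<in> I \<Longrightarrow> F x 0 \<xi> = 0"
    and A5: "\<exists>\<omega>. modulus \<omega> \<and> (\<forall>x y. \<forall>\<xi>\<in>I. \<bar>f x \<xi> - f y \<xi>\<bar> \<le> \<omega> (dist x y))"
      "\<And>R. R > 0 \<Longrightarrow> \<exists>\<omega>. modulus \<omega> \<and> (\<forall>x y p q. \<forall>\<xi>\<in>I. norm p < R \<longrightarrow> norm q < R \<longrightarrow>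
                 \<bar>F x p \<xi> - F y q \<xi>\<bar> \<le> \<omega> (dist x y + dist p q))"
    and u_cls: "U_plus I u" and v_cls: "U_minus I v"
    and u_sub: "viscosity_subsolution I F k f u"
    and v_super: "viscosity_supersolution I F k f v"
    and u_bdd: "\<exists>M. \<forall>x. \<forall>\<xi>\<in>I. u x \<xi> \<le> M"
    and v_bdd: "\<exists>M. \<forall>x. \<forall>\<xi>\<in>I. - v x \<xi> \<le> M"
    and on_Z: "\<And>x \<xi>. (x, \<xi>) \<in> Zset I f \<Longrightarrow> u x \<xi> \<le> v x \<xi>"
  shows "\<forall>x. \<forall>\<xi>\<in>I. u x \<xi> \<le> v x \<xi>"
proof (intro allI ballI)
  fix x \<xi> assume xi: "\<xi> \<in> I"
  obtain Bf where Bf: "\<And>x \<xi>. \<xi> \<in> I \<Longrightarrow> \<bar>f x \<xi>\<bar> \<le> Bf" using f_bdd by blast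
  obtain Mu where Mu: "\<And>x \<xi>. \<xi> \<in> I \<Longrightarrow> u x \<xi> \<le> Mu" using u_bdd by blast
  obtain Mv where Mv: "\<And>x \<xi>. \<xi> \<in> I \<Longrightarrow> - v x \<xi> \<le> Mv" using v_bdd by blast
  show "u x \<xi> \<le> v x \<xi>"
  proof (rule ccontr)
    assume "\<not> u x \<xi> \<le> v x \<xi>"
    define \<delta> where "\<delta> = u x \<xi> - v x \<xi>"
    have \<delta>: "\<delta> > 0" using \<open>\<not> u x \<xi> \<le> v x \<xi>\<close> by (simp add: \<delta>_def)
    define t where "t = min (1/2) (\<delta> / (2 * (\<bar>Mv\<bar> + \<bar>u x \<xi>\<bar> + 1)))"
    have tpos: "t > 0" using \<delta> by (simp add: t_def)
    have tle: "t \<le> 1/2" unfolding t_def by (rule min.cobounded1)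
    have tle2: "t * (\<bar>Mv\<bar> + \<bar>u x \<xi>\<bar> + 1) \<le> \<delta> / 2"
    proof -
      have "t \<le> \<delta> / (2 * (\<bar>Mv\<bar> + \<bar>u x \<xi>\<bar> + 1))" unfolding t_def by (rule min.cobounded2)
      then show ?thesis by (simp add: field_simps)
    qed
    define \<theta> where "\<theta> = 1 - t"
    interpret c: cmp I k F f u v k0 k1 C1 C2 m Mu Mv Bf \<theta>
    proof unfold_locales
      show "0 < \<theta>" "\<theta> < 1" using tpos tle by (auto simp: \<theta>_def)
    qed (use I_int k_meas k_bds F_per f_per f_cont Bf A1 A2(1) A3 A4(2) A5(2) u_cls v_cls u_sub v_super Mu Mv in auto)
    have "\<theta> * u x \<xi> - v x \<xi> \<le> (1 - \<theta>) * Mv" using c.w_le[OF on_Z] xi by (simp add: c.w_def)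
    then have h1: "(1 - t) * u x \<xi> - v x \<xi> \<le> t * Mv" by (simp add: \<theta>_def)
    have h2: "\<delta> = ((1 - t) * u x \<xi> - v x \<xi>) + t * u x \<xi>" by (simp add: \<delta>_def algebra_simps)
    have h3: "t * Mv \<le> t * \<bar>Mv\<bar>" using tpos by (intro mult_left_mono) auto
    have h4: "t * u x \<xi> \<le> t * \<bar>u x \<xi>\<bar>" using tpos by (intro mult_left_mono) auto
    have h5: "t * (\<bar>Mv\<bar> + \<bar>u x \<xi>\<bar> + 1) = t * \<bar>Mv\<bar> + t * \<bar>u x \<xi>\<bar> + t" by (simp add: algebra_simps)
    show False using h1 h2 h3 h4 h5 tle2 \<delta> tpos by linarith
  qed
qed

end
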